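(* Fix an integer $0\le s\le d-2$ and a positive real $\lambda$. Let $E$ be an origin-centered ellipsoid in $\mathbb{R}^d$ whose principal semi-axes have lengths $\lambda,\lambda^2,\dots,\lambda^d$. Let $E'$ be a largest-volume ellipsoid of revolution with an $s$-dimensional axis contained in $E$, and let $F$ be the ($s$-dimensional) axis of $E'$. Then \[ \frac{\mathrm{vol}_d(E')}{\mathrm{vol}_d(E)}\le\frac1\lambda\quad\text{and}\quad E\cap F^\perp\not\subset x+\lambda\cdot\operatorname{int}(P_{F^\perp}E')\ \text{ for all } x\in\mathbb{R}^d. \]
   Context: For a linear subspace $F$, an $F$-operator is an invertible linear operator $A$ on $\mathbb{R}^d$ such that $F$ and $F^\perp$ are invariant under $A$ and $A|_{F^\perp}$ is a nonzero multiple of the identity on $F^\perp$. An ellipsoid of revolution with axis $F$ is a set $AB^d+z$, $A$ an $F$-operator, $z\in\mathbb{R}^d$, where $B^d$ is the closed unit ball; an ellipsoid of revolution with an $s$-dimensional axis is one with axis some $s$-dimensional subspace $F$. $P_{F^\perp}$ is orthogonal projection onto $F^\perp$. *)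

theory Defs
  imports "HOL-Analysis.Analysis"
begin

definition orth_proj :: "'a::euclidean_space set \<Rightarrow> 'a \<Rightarrow> 'a" where
  "orth_proj V x = (THE y. y \<in> V \<and> (\<forall>z\<in>V. (x - y) \<bullet> z = 0))"

definition F_operator :: "'a::euclidean_space set \<Rightarrow> ('a \<Rightarrow> 'a) \<Rightarrow> bool" where
  "F_operator F A \<longleftrightarrow> linear A \<and> bij A \<and> A ` F \<subseteq> F \<and> A ` (F\<^sup>\<bottom>) \<subseteq> F\<^sup>\<bottom> \<and>
     (\<exists>c. c \<noteq> 0 \<and> (\<forall>x\<in>F\<^sup>\<bottom>. A x = c *\<^sub>R x))"

definition ellipsoid_rev :: "'a::euclidean_space set \<Rightarrow> 'a set \<Rightarrow> bool" where
  "ellipsoid_rev F S \<longleftrightarrow> (\<exists>A z. F_operator F A \<and> S = (\<lambda>x. A x + z) ` cball 0 1)"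

definition ellipsoid_rev_dim :: "nat \<Rightarrow> 'a::euclidean_space set \<Rightarrow> bool" where
  "ellipsoid_rev_dim s S \<longleftrightarrow> (\<exists>F. subspace F \<and> dim F = s \<and> ellipsoid_rev F S)"

end

theory Submission
  imports Defs
begin

typedef (overloaded) ('a::euclidean_space) bidx = "Basis :: 'a set"
  morphisms Rep_bidx Abs_bidx
  using nonempty_Basis by blast

instance bidx :: (euclidean_space) finite
proof
  have "(UNIV :: 'a bidx set) = Abs_bidx ` Basis"
    using type_definition.univ[OF type_definition_bidx] .
  then show "finite (UNIV :: 'a bidx set)" by (metis finite_Basis finite_imageI)
qed

definition bnat :: "'a::euclidean_space bidx \<Rightarrow> nat" where
  "bnat = (SOME f. inj f)"

lemma inj_bnat: "inj bnat"
proof -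
  obtain f :: "'a bidx \<Rightarrow> nat" and n where "f ` UNIV = {i. i < n} \<and> inj_on f UNIV"
    using finite_imp_inj_to_nat_seg[of "UNIV :: 'a bidx set"] by auto
  then have "\<exists>f :: 'a bidx \<Rightarrow> nat. inj f" by blast
  then show ?thesis unfolding bnat_def by (rule someI_ex)
qed

instantiation bidx :: (euclidean_space) wellorder
begin
definition less_eq_bidx :: "'a bidx \<Rightarrow> 'a bidx \<Rightarrow> bool" where
  "less_eq_bidx i j \<longleftrightarrow> bnat i \<le> bnat j"
definition less_bidx :: "'a bidx \<Rightarrow> 'a bidx \<Rightarrow> bool" where
  "less_bidx i j \<longleftrightarrow> bnat i < bnat j"
instance
proof
  fix x y z :: "'a bidx"
  show "(x < y) = (x \<le> y \<and> \<not> y \<le> x)" by (auto simp: less_eq_bidx_def less_bidx_def)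
  show "x \<le> x" by (simp add: less_eq_bidx_def)
  show "x \<le> y \<Longrightarrow> y \<le> z \<Longrightarrow> x \<le> z" by (simp add: less_eq_bidx_def)
  show "x \<le> y \<Longrightarrow> y \<le> x \<Longrightarrow> x = y"
    using inj_bnat unfolding less_eq_bidx_def inj_def by (metis antisym)
  show "x \<le> y \<or> y \<le> x" by (auto simp: less_eq_bidx_def)
next
  fix P :: "'a bidx \<Rightarrow> bool" and a
  assume step: "\<And>x. (\<And>y. y < x \<Longrightarrow> P y) \<Longrightarrow> P x"
  have "\<And>x. bnat x = k \<Longrightarrow> P x" for k
  proof (induction k rule: less_induct)
    case (less k)
    then show ?case using step by (auto simp: less_bidx_def)
  qed
  then show "P a" by blast
qed
end

lemma bij_Rep_bidx: "bij_betw Rep_bidx (UNIV :: 'a::euclidean_space bidx set) Basis"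
  by (metis bij_betw_def type_definition.Rep_range type_definition_bidx inj_on_def Rep_bidx_inject)

definition toC :: "'a::euclidean_space \<Rightarrow> real^('a bidx)" where
  "toC x = (\<chi> i. x \<bullet> Rep_bidx i)"

definition fromC :: "real^('a::euclidean_space bidx) \<Rightarrow> 'a" where
  "fromC v = (\<Sum>i\<in>UNIV. (v$i) *\<^sub>R Rep_bidx i)"

lemma toC_nth [simp]: "toC x $ i = x \<bullet> Rep_bidx i"
  by (simp add: toC_def)

lemma Rep_bidx_inner: "Rep_bidx i \<bullet> Rep_bidx j = (if i = j then 1 else 0)"
  using Rep_bidx[of i] Rep_bidx[of j] Rep_bidx_inject[of i j]
  by (auto simp: inner_Basis)

lemma fromC_inner: "fromC v \<bullet> Rep_bidx j = v $ j"
proof -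
  have "fromC v \<bullet> Rep_bidx j = (\<Sum>i\<in>UNIV. v$i * (Rep_bidx i \<bullet> Rep_bidx j))"
    by (simp add: fromC_def inner_sum_left)
  also have "\<dots> = (\<Sum>i\<in>UNIV. if i = j then v$i else 0)"
    by (rule sum.cong) (auto simp: Rep_bidx_inner)
  also have "\<dots> = v$j" by simp
  finally show ?thesis .
qed

lemma toC_fromC [simp]: "toC (fromC v) = v"
  by (simp add: vec_eq_iff fromC_inner)

lemma fromC_toC [simp]: "fromC (toC x) = x"
proof -
  have "fromC (toC x) = (\<Sum>i\<in>UNIV. (x \<bullet> Rep_bidx i) *\<^sub>R Rep_bidx i)"
    by (simp add: fromC_def)
  also have "\<dots> = (\<Sum>b\<in>Basis. (x \<bullet> b) *\<^sub>R b)"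
    using sum.reindex_bij_betw[OF bij_Rep_bidx, of "\<lambda>b. (x \<bullet> b) *\<^sub>R b"] by simp
  also have "\<dots> = x" by (rule euclidean_representation)
  finally show ?thesis .
qed

lemma linear_toC: "linear toC"
  by (auto simp: linear_iff vec_eq_iff inner_add_left)

lemma linear_fromC: "linear fromC"
  by (auto simp: linear_iff fromC_def scaleR_add_left sum.distrib scaleR_sum_right)

lemma fromC_vimage: "fromC -` S = toC ` S"
  by (auto simp: image_iff) (metis fromC_toC toC_fromC)+

lemma meas_fromC [measurable]: "fromC \<in> borel \<rightarrow>\<^sub>M borel"
proof -
  have "bounded_linear fromC" using linear_fromC linear_linear by blast
  then show ?thesis by (intro borel_measurable_continuous_onI linear_continuous_on)
qed

lemma lborel_fromC: "lborel = distr lborel borel (fromC :: _ \<Rightarrow> 'a::euclidean_space)"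
proof (rule lborel_eqI)
  fix l u :: 'a
  assume le: "\<And>b. b \<in> Basis \<Longrightarrow> l \<bullet> b \<le> u \<bullet> b"
  have pre: "fromC -` box l u = box (toC l) (toC u)"
  proof -
    have B: "Basis = Rep_bidx ` (UNIV :: 'a bidx set)"
      using bij_Rep_bidx by (auto simp add: bij_betw_def)
    show ?thesis
      unfolding set_eq_iff vimage_eq mem_box_cart mem_box B ball_simps
      by (simp add: fromC_inner)
  qed
  have le': "\<forall>b\<in>Basis. toC l \<bullet> b \<le> toC u \<bullet> b"
    using le Rep_bidx by (auto simp: Basis_vec_def inner_axis)
  have "emeasure (distr lborel borel fromC) (box l u) = emeasure lborel (box (toC l) (toC u))"
    by (simp add: emeasure_distr pre)
  also have "\<dots> = (\<Prod>b\<in>Basis. (toC u - toC l) \<bullet> b)"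
    using le' by (simp add: emeasure_lborel_box_eq)
  also have "(\<Prod>b\<in>Basis. (toC u - toC l) \<bullet> b) = (\<Prod>i\<in>UNIV. (u - l) \<bullet> Rep_bidx i)"
  proof -
    have "(Basis :: (real^'a bidx) set) = (\<lambda>i. axis i 1) ` UNIV"
      by (auto simp: Basis_vec_def)
    moreover have "inj (\<lambda>i::'a bidx. axis i (1::real))"
      by (auto simp: inj_def axis_eq_axis)
    ultimately have "(\<Prod>b\<in>Basis. (toC u - toC l) \<bullet> b) = (\<Prod>i\<in>UNIV. (toC u - toC l) \<bullet> axis i 1)"
      by (metis (no_types, lifting) comp_apply prod.cong prod.reindex)
    then show ?thesis
      by (simp add: inner_axis inner_diff_left)
  qed
  also have "\<dots> = (\<Prod>b\<in>Basis. (u - l) \<bullet> b)"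
    using prod.reindex_bij_betw[OF bij_Rep_bidx, of "\<lambda>b. (u - l) \<bullet> b"] by simp
  finally show "emeasure (distr lborel borel fromC) (box l u) = (\<Prod>b\<in>Basis. (u - l) \<bullet> b)" .
qed simp

lemma measure_lebesgue_borel:
  "S \<in> sets borel \<Longrightarrow> measure lebesgue S = measure lborel S"
  by simp

lemma measure_lborel_toC:
  fixes S :: "'a::euclidean_space set"
  assumes "S \<in> sets borel"
  shows "measure lborel S = measure lborel (toC ` S)"
proof -
  have "measure (lborel :: 'a measure) S = measure (distr lborel borel (fromC :: _ \<Rightarrow> 'a)) S"
    using lborel_fromC by metis
  also have "\<dots> = measure lborel (fromC -` S \<inter> space lborel)"
    using assms by (simp add: measure_distr)
  also have "\<dots> = measure lborel (toC ` S)"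
    by (simp add: fromC_vimage)
  finally show ?thesis .
qed

definition cf :: "('a::euclidean_space \<Rightarrow> 'a) \<Rightarrow> real" where
  "cf f = \<bar>det (matrix (toC \<circ> f \<circ> fromC))\<bar>"

lemma bounded_linear_toC: "bounded_linear toC"
  using linear_toC linear_linear by blast

lemma compact_linear_image:
  fixes f :: "'a::euclidean_space \<Rightarrow> 'b::euclidean_space"
  shows "linear f \<Longrightarrow> compact S \<Longrightarrow> compact (f ` S)"
  by (metis compact_continuous_image linear_continuous_on linear_linear)

lemma measure_lin_image:
  fixes f :: "'a::euclidean_space \<Rightarrow> 'a"
  assumes f: "linear f" and S: "compact S"
  shows "measure lebesgue (f ` S) = cf f * measure lebesgue S"
proof -
  define g where "g = toC \<circ> f \<circ> fromC"
  have lg: "linear g" unfolding g_def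
    by (intro linear_compose linear_toC linear_fromC f)
  have fS: "compact (f ` S)"
    using f S by (intro compact_linear_image)
  have tS: "compact (toC ` S)"
    using S linear_toC by (intro compact_linear_image)
  have eq: "toC ` (f ` S) = g ` (toC ` S)"
    by (simp add: g_def image_image)
  have "measure lebesgue (f ` S) = measure lborel (f ` S)"
    using fS by (simp add: compact_imp_closed borel_closed)
  also have "\<dots> = measure lborel (toC ` (f ` S))"
    using fS by (intro measure_lborel_toC) (simp add: compact_imp_closed borel_closed)
  also have "\<dots> = measure lebesgue (g ` (toC ` S))"
  proof -
    have "compact (g ` (toC ` S))" by (rule compact_linear_image[OF lg tS])
    then show ?thesis unfolding eq by (simp add: compact_imp_closed borel_closed)
  qed
  also have "\<dots> = \<bar>det (matrix g)\<bar> * measure lebesgue (toC ` S)"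
    using lg tS by (intro measure_linear_image) (auto intro: lmeasurable_compact)
  also have "measure lebesgue (toC ` S) = measure lborel (toC ` S)"
    using tS by (simp add: compact_imp_closed borel_closed)
  also have "\<dots> = measure lborel S"
    using S by (intro measure_lborel_toC[symmetric]) (simp add: compact_imp_closed borel_closed)
  also have "\<dots> = measure lebesgue S"
    using S by (simp add: compact_imp_closed borel_closed)
  finally show ?thesis by (simp add: cf_def g_def comp_def)
qed


definition onf :: "(nat \<Rightarrow> 'a::euclidean_space) \<Rightarrow> bool" where
  "onf v \<longleftrightarrow> (\<forall>i<DIM('a). \<forall>j<DIM('a). v i \<bullet> v j = (if i = j then 1 else 0))"

lemma onfD: "onf v \<Longrightarrow> i < DIM('a) \<Longrightarrow> j < DIM('a) \<Longrightarrow> (v i :: 'a::euclidean_space) \<bullet> v j = (if i = j then 1 else 0)"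
  by (simp add: onf_def)

lemma onf_norm: "onf v \<Longrightarrow> i < DIM('a) \<Longrightarrow> norm (v i :: 'a::euclidean_space) = 1"
  by (metis norm_eq_1 onfD)

lemma onf_inj: "onf (v :: nat \<Rightarrow> 'a::euclidean_space) \<Longrightarrow> inj_on v {..<DIM('a)}"
  by (auto simp: inj_on_def) (metis onfD zero_neq_one)

lemma onf_span:
  assumes "onf (v :: nat \<Rightarrow> 'a::euclidean_space)"
  shows "span (v ` {..<DIM('a)}) = UNIV"
proof -
  let ?V = "v ` {..<DIM('a)}"
  have po: "pairwise orthogonal ?V"
    using assms by (auto simp: pairwise_def orthogonal_def onfD)
  have z: "0 \<notin> ?V"
    using assms onf_norm by fastforce
  have ind: "independent ?V"
    by (rule pairwise_orthogonal_independent[OF po z])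
  have card: "card ?V = DIM('a)"
    using onf_inj[OF assms] by (simp add: card_image)
  have "dim (span ?V) = DIM('a)"
    using ind card dim_span_eq_card_independent by metis
  then show ?thesis
    by (metis dim_UNIV order_refl subset_UNIV subspace_UNIV subspace_dim_equal subspace_span)
qed

lemma onf_sum_inner:
  assumes "onf (v :: nat \<Rightarrow> 'a::euclidean_space)" "k < DIM('a)"
  shows "(\<Sum>i<DIM('a). c i *\<^sub>R v i) \<bullet> v k = c k"
proof -
  have "(\<Sum>i<DIM('a). c i *\<^sub>R v i) \<bullet> v k = (\<Sum>i<DIM('a). c i * (v i \<bullet> v k))"
    by (simp add: inner_sum_left)
  also have "\<dots> = (\<Sum>i<DIM('a). if i = k then c i else 0)"
    by (rule sum.cong) (use assms in \<open>auto simp: onfD\<close>)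
  also have "\<dots> = c k" using assms(2) by simp
  finally show ?thesis .
qed

lemma onf_expand:
  assumes "onf (v :: nat \<Rightarrow> 'a::euclidean_space)"
  shows "x = (\<Sum>i<DIM('a). (x \<bullet> v i) *\<^sub>R v i)"
proof -
  define y where "y = x - (\<Sum>i<DIM('a). (x \<bullet> v i) *\<^sub>R v i)"
  have "orthogonal y w" if "w \<in> v ` {..<DIM('a)}" for w
    using that assms by (auto simp: y_def orthogonal_def inner_diff_left onf_sum_inner[OF assms])
  then have "orthogonal y y"
    using orthogonal_to_span[of y "v ` {..<DIM('a)}" y] onf_span[OF assms] by auto
  then have "y = 0" by (simp add: orthogonal_def)
  then show ?thesis by (simp add: y_def)
qed

lemma onf_inner:
  assumes "onf (v :: nat \<Rightarrow> 'a::euclidean_space)"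
  shows "x \<bullet> y = (\<Sum>i<DIM('a). (x \<bullet> v i) * (y \<bullet> v i))"
proof -
  have "x \<bullet> y = (\<Sum>i<DIM('a). (x \<bullet> v i) *\<^sub>R v i) \<bullet> y"
    using onf_expand[OF assms, of x] by simp
  also have "\<dots> = (\<Sum>i<DIM('a). (x \<bullet> v i) * (y \<bullet> v i))"
    by (simp add: inner_sum_left) (simp add: inner_commute)
  finally show ?thesis .
qed

lemma onf_norm2:
  assumes "onf (v :: nat \<Rightarrow> 'a::euclidean_space)"
  shows "(norm x)\<^sup>2 = (\<Sum>i<DIM('a). (x \<bullet> v i)\<^sup>2)"
  using onf_inner[OF assms, of x x] by (simp add: power2_eq_square flip: power2_norm_eq_inner)

lemma onf_eqI:
  assumes "onf (v :: nat \<Rightarrow> 'a::euclidean_space)" "\<And>i. i < DIM('a) \<Longrightarrow> x \<bullet> v i = y \<bullet> v i"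
  shows "x = y"
  using onf_expand[OF assms(1), of x] onf_expand[OF assms(1), of y] assms(2) by simp

definition frame_map :: "(nat \<Rightarrow> 'a::euclidean_space) \<Rightarrow> (nat \<Rightarrow> 'a) \<Rightarrow> 'a \<Rightarrow> 'a" where
  "frame_map p q x = (\<Sum>i<DIM('a). (x \<bullet> p i) *\<^sub>R q i)"

lemma linear_frame_map: "linear (frame_map p q)"
  by (auto simp: linear_iff frame_map_def inner_add_left scaleR_add_left sum.distrib scaleR_sum_right)

lemma frame_map_inner:
  "onf q \<Longrightarrow> k < DIM('a) \<Longrightarrow> frame_map p q x \<bullet> q k = (x::'a::euclidean_space) \<bullet> p k"
  unfolding frame_map_def by (rule onf_sum_inner)

lemma norm_frame_map:
  assumes "onf p" "onf (q :: nat \<Rightarrow> 'a::euclidean_space)"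
  shows "norm (frame_map p q x) = norm x"
proof -
  have "(norm (frame_map p q x))\<^sup>2 = (norm x)\<^sup>2"
    using onf_norm2[OF assms(2), of "frame_map p q x"] onf_norm2[OF assms(1), of x]
    by (simp add: frame_map_inner[OF assms(2)])
  then show ?thesis by simp
qed

lemma frame_map_inv:
  assumes "onf p" "onf (q :: nat \<Rightarrow> 'a::euclidean_space)"
  shows "frame_map q p (frame_map p q x) = x"
  by (rule onf_eqI[OF assms(1)]) (simp add: frame_map_inner assms)

lemma frame_map_cball:
  assumes "onf p" "onf (q :: nat \<Rightarrow> 'a::euclidean_space)"
  shows "frame_map p q ` cball 0 1 = cball 0 1"
proof
  show "frame_map p q ` cball 0 1 \<subseteq> cball 0 1"
    using norm_frame_map[OF assms] by auto
  show "cball 0 1 \<subseteq> frame_map p q ` cball 0 1"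
  proof
    fix y :: 'a assume "y \<in> cball 0 1"
    then have "frame_map q p y \<in> cball 0 1" using norm_frame_map[OF assms(2,1)] by auto
    moreover have "frame_map p q (frame_map q p y) = y" by (rule frame_map_inv[OF assms(2,1)])
    ultimately show "y \<in> frame_map p q ` cball 0 1" by (metis image_eqI)
  qed
qed


definition ellmap :: "(nat \<Rightarrow> 'a::euclidean_space) \<Rightarrow> (nat \<Rightarrow> real) \<Rightarrow> 'a \<Rightarrow> 'a" where
  "ellmap v a x = (\<Sum>i<DIM('a). (a i * (x \<bullet> v i)) *\<^sub>R v i)"

lemma linear_ellmap: "linear (ellmap v a)"
  by (auto simp: linear_iff ellmap_def inner_add_left distrib_left scaleR_add_left sum.distrib scaleR_sum_right mult.left_commute)

lemma ellmap_inner: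
  "onf v \<Longrightarrow> k < DIM('a) \<Longrightarrow> ellmap v a x \<bullet> v k = a k * ((x::'a::euclidean_space) \<bullet> v k)"
  unfolding ellmap_def by (rule onf_sum_inner)

definition dmap :: "('a::euclidean_space \<Rightarrow> real) \<Rightarrow> 'a \<Rightarrow> 'a" where
  "dmap \<alpha> y = (\<Sum>b\<in>Basis. (\<alpha> b * (y \<bullet> b)) *\<^sub>R b)"

lemma linear_dmap: "linear (dmap \<alpha>)"
  by (auto simp: linear_iff dmap_def inner_add_left distrib_left scaleR_add_left sum.distrib scaleR_sum_right mult.left_commute)

lemma dmap_inner: "b0 \<in> Basis \<Longrightarrow> dmap \<alpha> y \<bullet> b0 = \<alpha> b0 * (y \<bullet> b0)"
proof -
  assume b0: "b0 \<in> Basis"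
  have "dmap \<alpha> y \<bullet> b0 = (\<Sum>b\<in>Basis. \<alpha> b * (y \<bullet> b) * (b \<bullet> b0))"
    by (simp add: dmap_def inner_sum_left)
  also have "\<dots> = (\<Sum>b\<in>Basis. if b = b0 then \<alpha> b * (y \<bullet> b) else 0)"
    by (rule sum.cong) (use b0 in \<open>auto simp: inner_Basis\<close>)
  also have "\<dots> = \<alpha> b0 * (y \<bullet> b0)" using b0 by simp
  finally show ?thesis .
qed

lemma dmap_basis: "b0 \<in> Basis \<Longrightarrow> dmap \<alpha> b0 = \<alpha> b0 *\<^sub>R b0"
  by (rule euclidean_eqI) (auto simp: dmap_inner inner_Basis)

lemma fromC_axis: "fromC (axis j 1) = Rep_bidx j"
proof -
  have "fromC (axis j 1) = (\<Sum>i\<in>UNIV. (if i = j then 1 else 0) *\<^sub>R Rep_bidx i)"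
    unfolding fromC_def by (rule sum.cong) (auto simp: axis_def)
  also have "\<dots> = (\<Sum>i\<in>UNIV. if i = j then Rep_bidx i else 0)"
    by (rule sum.cong) auto
  also have "\<dots> = Rep_bidx j" by simp
  finally show ?thesis .
qed

lemma cf_dmap:
  assumes pos: "\<And>b. b \<in> Basis \<Longrightarrow> \<alpha> b > 0"
  shows "cf (dmap \<alpha>) = (\<Prod>b\<in>Basis. \<alpha> b)"
proof -
  let ?M = "matrix (toC \<circ> dmap \<alpha> \<circ> fromC)"
  have ent: "?M $ i $ j = (if i = j then \<alpha> (Rep_bidx j) else 0)" for i j
    using Rep_bidx[of j] by (simp add: matrix_def fromC_axis dmap_basis Rep_bidx_inner)
  have "det ?M = (\<Prod>i\<in>UNIV. \<alpha> (Rep_bidx i))"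
    by (subst det_diagonal) (auto simp: ent)
  also have "\<dots> = (\<Prod>b\<in>Basis. \<alpha> b)"
    using prod.reindex_bij_betw[OF bij_Rep_bidx, of \<alpha>] by simp
  finally have "det ?M = (\<Prod>b\<in>Basis. \<alpha> b)" .
  moreover have "(\<Prod>b\<in>Basis. \<alpha> b) > 0" using pos by (simp add: prod_pos)
  ultimately show ?thesis by (simp add: cf_def)
qed

lemma measure_cball_pos: "measure lebesgue (cball (0::'a::euclidean_space) 1) > 0"
  by (simp add: content_cball_pos)

lemma cf_frame_map:
  assumes "onf p" "onf (q :: nat \<Rightarrow> 'a::euclidean_space)"
  shows "cf (frame_map p q) = 1"
proof -
  have "measure lebesgue (frame_map p q ` cball 0 1) = cf (frame_map p q) * measure lebesgue (cball (0::'a) 1)"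
    by (rule measure_lin_image[OF linear_frame_map compact_cball])
  then have "measure lebesgue (cball (0::'a) 1) = cf (frame_map p q) * measure lebesgue (cball (0::'a) 1)"
    by (simp add: frame_map_cball[OF assms])
  then show ?thesis using measure_cball_pos[where 'a='a] by simp
qed

lemma onf_Basis_enum:
  obtains e :: "nat \<Rightarrow> 'a::euclidean_space" where "bij_betw e {..<DIM('a)} Basis" "onf e"
proof -
  obtain e :: "nat \<Rightarrow> 'a" where e: "bij_betw e {0..<card (Basis :: 'a set)} Basis"
    using ex_bij_betw_nat_finite[OF finite_Basis] by blast
  then have e': "bij_betw e {..<DIM('a)} Basis" by (simp add: atLeast0LessThan)
  have "onf e"
    unfolding onf_def
  proof (intro allI impI)
    fix i j assume "i < DIM('a)" "j < DIM('a)"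
    then show "e i \<bullet> e j = (if i = j then 1 else 0)"
    proof (cases "i = j")
      case True
      then show ?thesis using e' \<open>j < DIM('a)\<close> by (auto simp: inner_Basis dest: bij_betw_apply)
    next
      case False
      then have "e i \<noteq> e j" using e' \<open>i < DIM('a)\<close> \<open>j < DIM('a)\<close>
        by (auto simp: bij_betw_def inj_on_def)
      moreover have "e i \<in> Basis" "e j \<in> Basis"
        using e' \<open>i < DIM('a)\<close> \<open>j < DIM('a)\<close> by (auto dest: bij_betw_apply)
      ultimately show ?thesis using False by (simp add: inner_Basis)
    qed
  qed
  with e' that show ?thesis by blast
qed

lemma vol_ellmap:
  fixes v :: "nat \<Rightarrow> 'a::euclidean_space"
  assumes v: "onf v" and pos: "\<And>i. i < DIM('a) \<Longrightarrow> a i > 0"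
  shows "measure lebesgue (ellmap v a ` cball 0 1) = (\<Prod>i<DIM('a). a i) * measure lebesgue (cball (0::'a) 1)"
proof -
  obtain e :: "nat \<Rightarrow> 'a" where e: "bij_betw e {..<DIM('a)} Basis" and oe: "onf e"
    by (rule onf_Basis_enum)
  define \<alpha> where "\<alpha> b = a (inv_into {..<DIM('a)} e b)" for b
  have \<alpha>e: "\<alpha> (e k) = a k" if "k < DIM('a)" for k
    using that e by (simp add: \<alpha>_def bij_betw_def inv_into_f_f)
  have \<alpha>pos: "\<alpha> b > 0" if "b \<in> Basis" for b
  proof -
    have "inv_into {..<DIM('a)} e b \<in> {..<DIM('a)}"
      using that e by (metis bij_betw_def inv_into_into)
    then show ?thesis using pos by (simp add: \<alpha>_def)
  qed
  have eq: "ellmap v a x = frame_map e v (dmap \<alpha> (frame_map v e x))" for x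
  proof (rule onf_eqI[OF v])
    fix k assume k: "k < DIM('a)"
    have ek: "e k \<in> Basis" using e k by (auto dest: bij_betw_apply)
    show "ellmap v a x \<bullet> v k = frame_map e v (dmap \<alpha> (frame_map v e x)) \<bullet> v k"
      using k by (simp add: ellmap_inner[OF v] frame_map_inner[OF v] frame_map_inner[OF oe] dmap_inner[OF ek] \<alpha>e)
  qed
  have img: "ellmap v a ` cball 0 1 = frame_map e v ` (dmap \<alpha> ` cball 0 1)"
  proof -
    have "ellmap v a ` cball 0 1 = frame_map e v ` (dmap \<alpha> ` (frame_map v e ` cball 0 1))"
      by (simp add: image_image eq)
    then show ?thesis by (simp add: frame_map_cball[OF v oe])
  qed
  have cD: "compact (dmap \<alpha> ` cball (0::'a) 1)"
    by (rule compact_linear_image[OF linear_dmap compact_cball])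
  have "measure lebesgue (ellmap v a ` cball 0 1) = cf (frame_map e v) * measure lebesgue (dmap \<alpha> ` cball (0::'a) 1)"
    unfolding img by (rule measure_lin_image[OF linear_frame_map cD])
  also have "\<dots> = measure lebesgue (dmap \<alpha> ` cball (0::'a) 1)"
    by (simp add: cf_frame_map[OF oe v])
  also have "\<dots> = cf (dmap \<alpha>) * measure lebesgue (cball (0::'a) 1)"
    by (rule measure_lin_image[OF linear_dmap compact_cball])
  also have "cf (dmap \<alpha>) = (\<Prod>b\<in>Basis. \<alpha> b)"
    by (rule cf_dmap[OF \<alpha>pos])
  also have "\<dots> = (\<Prod>i<DIM('a). \<alpha> (e i))"
    using prod.reindex_bij_betw[OF e, of \<alpha>] by simp
  also have "\<dots> = (\<Prod>i<DIM('a). a i)"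
    by (rule prod.cong) (auto simp: \<alpha>e)
  finally show ?thesis .
qed


definition selfadj :: "('a::euclidean_space \<Rightarrow> 'a) \<Rightarrow> bool" where
  "selfadj S \<longleftrightarrow> linear S \<and> (\<forall>x y. S x \<bullet> y = x \<bullet> S y)"

lemma quad_nonpos_linear:
  fixes a b :: real
  assumes "\<And>t. 2 * t * a + t\<^sup>2 * b \<le> 0" "b \<le> 0"
  shows "a = 0"
proof (rule ccontr)
  assume a: "a \<noteq> 0"
  define t where "t = a / (1 - b)"
  have pos: "1 - b > 0" using assms(2) by simp
  have "2 * t * a + t\<^sup>2 * b = a\<^sup>2 * (2 - b) / (1 - b)\<^sup>2"
    using pos unfolding t_def power2_eq_square
    by (simp add: divide_simps) (simp add: algebra_simps)
  moreover have "a\<^sup>2 * (2 - b) / (1 - b)\<^sup>2 > 0"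
    using a assms(2) pos by (intro divide_pos_pos mult_pos_pos) auto
  ultimately show False using assms(1)[of t] by linarith
qed

lemma spectral_sub:
  fixes S :: "'a::euclidean_space \<Rightarrow> 'a"
  assumes sa: "selfadj S"
  shows "subspace V \<Longrightarrow> S ` V \<subseteq> V \<Longrightarrow> dim V = d \<Longrightarrow>
    \<exists>w \<mu>. (\<forall>i<d. \<forall>j<d. w i \<bullet> w j = (if i = j then 1 else 0)) \<and>
      (\<forall>i<d. w i \<in> V \<and> S (w i) = \<mu> i *\<^sub>R w i) \<and>
      (\<forall>i j. i \<le> j \<longrightarrow> j < d \<longrightarrow> \<mu> j \<le> \<mu> i)"
proof (induction d arbitrary: V)
  case 0
  then show ?case by auto
next
  case (Suc d)
  have lin: "linear S" and adj: "\<And>x y. S x \<bullet> y = x \<bullet> S y"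
    using sa by (auto simp: selfadj_def)
  have V: "subspace V" using Suc.prems by simp
  define q where "q x = x \<bullet> S x" for x
  have Vne: "V \<noteq> {0}"
    using Suc.prems(3) by (metis dim_singleton nat.distinct(1) dim_span span_insert_0 span_empty)
  then obtain y0 where y0: "y0 \<in> V" "y0 \<noteq> 0" using V subspace_0 by blast
  let ?K = "V \<inter> sphere 0 1"
  have Kne: "?K \<noteq> {}"
  proof -
    have "y0 /\<^sub>R norm y0 \<in> ?K" using y0 V by (auto simp: subspace_scale)
    then show ?thesis by blast
  qed
  have Kc: "compact ?K"
    by (metis Int_commute closed_subspace V compact_Int_closed compact_sphere)
  have cq: "continuous_on ?K q"
  proof -
    have "bounded_linear S" using lin linear_linear by blast
    then show ?thesis unfolding q_def
      by (intro continuous_intros) (auto intro: linear_continuous_on)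
  qed
  obtain x0 where x0K: "x0 \<in> ?K" and x0max: "\<And>y. y \<in> ?K \<Longrightarrow> q y \<le> q x0"
    using continuous_attains_sup[OF Kc Kne cq] by blast
  define \<mu>0 where "\<mu>0 = q x0"
  have x0V: "x0 \<in> V" and nx0: "norm x0 = 1" using x0K by auto
  have x0x0: "x0 \<bullet> x0 = 1" using nx0 by (simp add: norm_eq_1)
  have qle: "q y \<le> \<mu>0 * (y \<bullet> y)" if "y \<in> V" for y
  proof (cases "y = 0")
    case True then show ?thesis by (simp add: q_def linear_0[OF lin])
  next
    case False
    have "y /\<^sub>R norm y \<in> ?K" using that False V by (auto simp: subspace_scale)
    then have "q (y /\<^sub>R norm y) \<le> \<mu>0" using x0max by (simp add: \<mu>0_def)
    moreover have "q (y /\<^sub>R norm y) = q y / (norm y)\<^sup>2"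
      by (simp add: q_def linear_scale[OF lin] power2_eq_square divide_inverse)
    ultimately have "q y / (norm y)\<^sup>2 \<le> \<mu>0" by simp
    then show ?thesis using False by (simp add: field_simps power2_norm_eq_inner)
  qed
  have orth0: "y \<bullet> S x0 = 0" if "y \<in> V" "y \<bullet> x0 = 0" for y
  proof -
    have "2 * t * (y \<bullet> S x0) + t\<^sup>2 * (q y - \<mu>0 * (y \<bullet> y)) \<le> 0" for t
    proof -
      have zV: "x0 + t *\<^sub>R y \<in> V" using x0V that(1) V by (simp add: subspace_add subspace_scale)
      have "q (x0 + t *\<^sub>R y) = \<mu>0 + 2 * t * (y \<bullet> S x0) + t\<^sup>2 * q y"
        using adj[of x0 y] adj[of y x0]
        by (simp add: q_def \<mu>0_def linear_add[OF lin] linear_scale[OF lin] inner_add_left inner_add_right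
             power2_eq_square algebra_simps inner_commute)
      moreover have "(x0 + t *\<^sub>R y) \<bullet> (x0 + t *\<^sub>R y) = 1 + t\<^sup>2 * (y \<bullet> y)"
        using that(2) x0x0 by (simp add: inner_add_left inner_add_right power2_eq_square inner_commute)
      ultimately show ?thesis using qle[OF zV] by (simp add: algebra_simps)
    qed
    moreover have "q y - \<mu>0 * (y \<bullet> y) \<le> 0" using qle[OF that(1)] by simp
    ultimately show ?thesis by (rule quad_nonpos_linear)
  qed
  have eig0: "S x0 = \<mu>0 *\<^sub>R x0"
  proof -
    define r where "r = S x0 - \<mu>0 *\<^sub>R x0"
    have SV: "S x0 \<in> V" using Suc.prems(2) x0V by blast
    have rV: "r \<in> V" using SV x0V V by (simp add: r_def subspace_diff subspace_scale)
    have rx0: "r \<bullet> x0 = 0"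
      using x0x0 inner_commute[of "S x0" x0] by (simp add: r_def inner_diff_left \<mu>0_def q_def)
    have "r \<bullet> r = r \<bullet> S x0 - \<mu>0 * (r \<bullet> x0)" by (simp add: r_def inner_diff_right)
    also have "\<dots> = 0" using orth0[OF rV rx0] rx0 by simp
    finally show ?thesis by (simp add: r_def)
  qed
  define V' where "V' = {y \<in> V. \<forall>x\<in>span {x0}. orthogonal x y}"
  have V'eq: "y \<in> V' \<longleftrightarrow> y \<in> V \<and> y \<bullet> x0 = 0" for y
    by (auto simp: V'_def span_singleton orthogonal_def inner_commute)
  have sV': "subspace V'"
    unfolding subspace_def using V by (auto simp: V'eq subspace_add subspace_scale inner_add_left subspace_0)
  have SV': "S ` V' \<subseteq> V'"
  proof
    fix z assume "z \<in> S ` V'"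
    then obtain y where y: "y \<in> V'" "z = S y" by blast
    have "S y \<bullet> x0 = y \<bullet> S x0" by (rule adj)
    also have "\<dots> = 0" using y V'eq eig0 by simp
    finally show "z \<in> V'" using y Suc.prems(2) V'eq by auto
  qed
  have "dim V' + dim (span {x0}) = dim V"
    unfolding V'_def
    by (rule dim_subspace_orthogonal_to_vectors) (use V x0V in \<open>auto simp: span_minimal\<close>)
  moreover have "dim (span {x0}) = 1" using nx0 by (auto simp: dim_span dim_singleton)
  ultimately have dV': "dim V' = d" using Suc.prems(3) by simp
  obtain w' \<mu>' where on': "\<forall>i<d. \<forall>j<d. w' i \<bullet> w' j = (if i = j then 1 else 0)"
    and ev': "\<forall>i<d. w' i \<in> V' \<and> S (w' i) = \<mu>' i *\<^sub>R w' i"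
    and so': "\<forall>i j. i \<le> j \<longrightarrow> j < d \<longrightarrow> \<mu>' j \<le> \<mu>' i"
    using Suc.IH[OF sV' SV' dV'] by blast
  define w where "w i = (if i = 0 then x0 else w' (i - 1))" for i
  define \<mu> where "\<mu> i = (if i = 0 then \<mu>0 else \<mu>' (i - 1))" for i
  have le0: "\<mu>' i \<le> \<mu>0" if "i < d" for i
  proof -
    have wV: "w' i \<in> V" using ev' that V'eq by blast
    have "\<mu>' i = q (w' i)"
      using ev' on' that by (simp add: q_def)
    also have "\<dots> \<le> \<mu>0 * (w' i \<bullet> w' i)" by (rule qle[OF wV])
    also have "\<dots> = \<mu>0" using on' that by simp
    finally show ?thesis .
  qed
  have "\<forall>i<Suc d. \<forall>j<Suc d. w i \<bullet> w j = (if i = j then 1 else 0)"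
  proof (intro allI impI)
    fix i j assume "i < Suc d" "j < Suc d"
    then show "w i \<bullet> w j = (if i = j then 1 else 0)"
      using on' ev' V'eq x0x0
      by (cases i; cases j) (auto simp: w_def inner_commute)
  qed
  moreover have "\<forall>i<Suc d. w i \<in> V \<and> S (w i) = \<mu> i *\<^sub>R w i"
    using ev' V'eq x0V eig0 by (auto simp: w_def \<mu>_def)
  moreover have "\<forall>i j. i \<le> j \<longrightarrow> j < Suc d \<longrightarrow> \<mu> j \<le> \<mu> i"
  proof (intro allI impI)
    fix i j assume "i \<le> j" "j < Suc d"
    then show "\<mu> j \<le> \<mu> i"
      using so' le0 by (cases i; cases j) (auto simp: \<mu>_def)
  qed
  ultimately show ?case by blast
qed

lemma spectral:
  fixes S :: "'a::euclidean_space \<Rightarrow> 'a"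
  assumes "selfadj S"
  obtains w \<mu> where "onf w" "\<And>i. i < DIM('a) \<Longrightarrow> S (w i) = \<mu> i *\<^sub>R w i"
    "\<And>i j. i \<le> j \<Longrightarrow> j < DIM('a) \<Longrightarrow> \<mu> j \<le> \<mu> i"
proof -
  have "S ` UNIV \<subseteq> UNIV" by simp
  from spectral_sub[OF assms subspace_UNIV this] obtain w \<mu> where
    "\<forall>i<DIM('a). \<forall>j<DIM('a). w i \<bullet> w j = (if i = j then 1 else 0)"
    "\<forall>i<DIM('a). w i \<in> UNIV \<and> S (w i) = \<mu> i *\<^sub>R w i"
    "\<forall>i j. i \<le> j \<longrightarrow> j < DIM('a) \<longrightarrow> \<mu> j \<le> \<mu> i"
    using dim_UNIV by metis
  then show ?thesis by (intro that[of w \<mu>]) (auto simp: onf_def)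
qed


definition eqf :: "(nat \<Rightarrow> 'a::euclidean_space) \<Rightarrow> real \<Rightarrow> 'a \<Rightarrow> real" where
  "eqf u lam y = (\<Sum>i<DIM('a). (y \<bullet> u i)\<^sup>2 / (lam ^ (i + 1))\<^sup>2)"

lemma eqf_scale: "eqf u lam (t *\<^sub>R y) = t\<^sup>2 * eqf u lam y"
  by (simp add: eqf_def sum_distrib_left power_mult_distrib)

lemma eqf_nonneg: "eqf u lam y \<ge> 0"
  by (simp add: eqf_def sum_nonneg)

lemma eqf_ge:
  assumes u: "onf (u :: nat \<Rightarrow> 'a::euclidean_space)" and lam: "lam \<ge> 1" and p: "p \<le> DIM('a)"
    and z: "\<And>l. p \<le> l \<Longrightarrow> l < DIM('a) \<Longrightarrow> y \<bullet> u l = 0"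
  shows "(norm y)\<^sup>2 / (lam ^ p)\<^sup>2 \<le> eqf u lam y"
proof -
  have "(norm y)\<^sup>2 / (lam ^ p)\<^sup>2 = (\<Sum>i<DIM('a). (y \<bullet> u i)\<^sup>2 / (lam ^ p)\<^sup>2)"
    by (simp add: onf_norm2[OF u] sum_divide_distrib)
  also have "\<dots> \<le> eqf u lam y"
    unfolding eqf_def
  proof (rule sum_mono)
    fix i assume i: "i \<in> {..<DIM('a)}"
    show "(y \<bullet> u i)\<^sup>2 / (lam ^ p)\<^sup>2 \<le> (y \<bullet> u i)\<^sup>2 / (lam ^ (i + 1))\<^sup>2"
    proof (cases "i < p")
      case True
      then have "lam ^ (i + 1) \<le> lam ^ p" using lam by (intro power_increasing) auto
      then have "(lam ^ (i + 1))\<^sup>2 \<le> (lam ^ p)\<^sup>2" using lam by (intro power_mono) auto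
      moreover have "(lam ^ (i + 1))\<^sup>2 > 0" using lam by simp
      ultimately show ?thesis by (intro divide_left_mono) auto
    next
      case False
      then show ?thesis using z i by simp
    qed
  qed
  finally show ?thesis .
qed

lemma exists_common_nonzero:
  fixes P Q :: "'a::euclidean_space set"
  assumes "subspace P" "subspace Q" "dim P + dim Q > DIM('a)"
  obtains x where "x \<noteq> 0" "x \<in> P" "x \<in> Q"
proof -
  have "dim {x + y |x y. x \<in> P \<and> y \<in> Q} + dim (P \<inter> Q) = dim P + dim Q"
    by (rule dim_sums_Int[OF assms(1,2)])
  moreover have "dim {x + y |x y. x \<in> P \<and> y \<in> Q} \<le> DIM('a)"
    by (rule dim_subset_UNIV)
  ultimately have d0: "dim (P \<inter> Q) \<noteq> 0" using assms(3) by linarith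
  have "\<exists>x\<in>P \<inter> Q. x \<noteq> 0"
  proof (rule ccontr)
    assume "\<not> (\<exists>x\<in>P \<inter> Q. x \<noteq> 0)"
    then have "P \<inter> Q \<subseteq> {0}" by blast
    then have "dim (P \<inter> Q) \<le> dim {0::'a}" by (rule dim_subset)
    then show False using d0 by (simp add: dim_singleton)
  qed
  then obtain x where "x \<in> P \<inter> Q" "x \<noteq> 0" by blast
  then show ?thesis by (intro that) auto
qed

lemma dim_span_onf:
  assumes "onf (v :: nat \<Rightarrow> 'a::euclidean_space)" "K \<subseteq> {..<DIM('a)}"
  shows "dim (span (v ` K)) = card K"
proof -
  have po: "pairwise orthogonal (v ` K)"
    using assms unfolding pairwise_def orthogonal_def
    by (smt (verit, ccfv_threshold) image_iff lessThan_iff onfD subset_iff)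
  have z: "0 \<notin> v ` K"
    using assms onf_norm by fastforce
  have "independent (v ` K)" by (rule pairwise_orthogonal_independent[OF po z])
  moreover have "card (v ` K) = card K"
    using card_image[OF inj_on_subset[OF onf_inj[OF assms(1)] assms(2)]] .
  ultimately show ?thesis using dim_span_eq_card_independent[of "v ` K"] by simp
qed

locale ctx =
  fixes u :: "nat \<Rightarrow> 'a::euclidean_space" and lam :: real and A :: "'a \<Rightarrow> 'a"
    and F :: "'a set" and c :: real and w :: "nat \<Rightarrow> 'a" and \<mu> :: "nat \<Rightarrow> real"
  assumes u: "onf u" and lam1: "lam \<ge> 1"
    and linA: "linear A" and injA: "inj A"
    and subF: "subspace F" and AF: "A ` F \<subseteq> F" and c0: "c \<noteq> 0"
    and AW: "\<And>x. x \<in> F\<^sup>\<bottom> \<Longrightarrow> A x = c *\<^sub>R x"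
    and contain: "\<And>x. norm x \<le> 1 \<Longrightarrow> eqf u lam (A x) \<le> 1"
    and w: "onf w" and eig: "\<And>i. i < DIM('a) \<Longrightarrow> adjoint A (A (w i)) = \<mu> i *\<^sub>R w i"
    and sorted: "\<And>i j. i \<le> j \<Longrightarrow> j < DIM('a) \<Longrightarrow> \<mu> j \<le> \<mu> i"
begin

lemma adj: "x \<bullet> adjoint A y = A x \<bullet> y"
  by (rule adjoint_works[OF linA])

lemma Ax_Aw: "k < DIM('a) \<Longrightarrow> A x \<bullet> A (w k) = \<mu> k * (x \<bullet> w k)"
proof -
  assume k: "k < DIM('a)"
  have "A x \<bullet> A (w k) = x \<bullet> adjoint A (A (w k))" by (simp only: adj)
  also have "\<dots> = \<mu> k * (x \<bullet> w k)" using eig[OF k] by simp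
  finally show ?thesis .
qed

lemma Aw_inner: "i < DIM('a) \<Longrightarrow> j < DIM('a) \<Longrightarrow> A (w i) \<bullet> A (w j) = (if i = j then \<mu> i else 0)"
  by (simp add: Ax_Aw onfD[OF w])

lemma A_expand: "A x = (\<Sum>i<DIM('a). (x \<bullet> w i) *\<^sub>R A (w i))"
proof -
  have "A x = A (\<Sum>i<DIM('a). (x \<bullet> w i) *\<^sub>R w i)" using onf_expand[OF w, of x] by simp
  also have "\<dots> = (\<Sum>i<DIM('a). (x \<bullet> w i) *\<^sub>R A (w i))"
    by (simp add: linear_sum[OF linA] linear_scale[OF linA])
  finally show ?thesis .
qed

lemma normA2: "(norm (A x))\<^sup>2 = (\<Sum>i<DIM('a). \<mu> i * (x \<bullet> w i)\<^sup>2)"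
proof -
  have "(norm (A x))\<^sup>2 = A x \<bullet> A x" by (simp add: power2_norm_eq_inner)
  also have "\<dots> = (\<Sum>i<DIM('a). (x \<bullet> w i) * (A x \<bullet> A (w i)))"
    by (subst (2) A_expand) (simp add: inner_sum_right)
  also have "\<dots> = (\<Sum>i<DIM('a). \<mu> i * (x \<bullet> w i)\<^sup>2)"
    by (rule sum.cong) (auto simp: Ax_Aw power2_eq_square)
  finally show ?thesis .
qed

lemma mu_pos: "i < DIM('a) \<Longrightarrow> \<mu> i > 0"
proof -
  assume i: "i < DIM('a)"
  have "w i \<noteq> 0" using onf_norm[OF w i] by auto
  then have "A (w i) \<noteq> 0" using injA linear_0[OF linA] unfolding inj_def by metis
  then have "A (w i) \<bullet> A (w i) > 0" by simp
  then show ?thesis using Aw_inner[OF i i] by simp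
qed

lemma contain2: "eqf u lam (A x) \<le> (norm x)\<^sup>2"
proof (cases "x = 0")
  case True then show ?thesis using contain[of 0] by (simp add: linear_0[OF linA] eqf_def)
next
  case False
  have "eqf u lam (A (x /\<^sub>R norm x)) \<le> 1" by (rule contain) (use False in simp)
  moreover have "A (x /\<^sub>R norm x) = (1 / norm x) *\<^sub>R A x"
    by (simp add: linear_scale[OF linA] divide_inverse)
  ultimately have "(1 / norm x)\<^sup>2 * eqf u lam (A x) \<le> 1" by (simp add: eqf_scale)
  then show ?thesis using False by (simp add: field_simps power2_eq_square)
qed

lemma CF:
  assumes k: "k < DIM('a)"
  shows "\<mu> k \<le> (lam ^ (DIM('a) - k))\<^sup>2"
proof -
  define P where "P = span (w ` {..k})"
  define R where "R = span (adjoint A ` u ` {DIM('a) - k..<DIM('a)})"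
  define Q where "Q = {y \<in> UNIV. \<forall>x\<in>R. orthogonal x y}"
  have dP: "dim P = Suc k"
    unfolding P_def using k by (subst dim_span_onf[OF w]) auto
  have dQR: "dim Q + dim R = DIM('a)"
    unfolding Q_def using dim_subspace_orthogonal_to_vectors[of R UNIV]
    by (simp add: R_def dim_UNIV)
  have "dim R \<le> card (adjoint A ` u ` {DIM('a) - k..<DIM('a)})"
    unfolding R_def dim_span by (rule dim_le_card') simp
  also have "\<dots> \<le> card {DIM('a) - k..<DIM('a)}"
    by (intro order_trans[OF card_image_le card_image_le]) auto
  also have "\<dots> = k" using k by simp
  finally have dR: "dim R \<le> k" .
  have sQ: "subspace Q"
    unfolding Q_def subspace_def orthogonal_def by (auto simp: inner_add_right)
  obtain x where x0: "x \<noteq> 0" and xP: "x \<in> P" and xQ: "x \<in> Q"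
  proof (rule exists_common_nonzero[of P Q])
    show "subspace P" unfolding P_def by simp
    show "subspace Q" by (rule sQ)
    show "dim P + dim Q > DIM('a)" using dP dQR dR by linarith
  qed
  have Axu: "A x \<bullet> u l = 0" if "DIM('a) - k \<le> l" "l < DIM('a)" for l
  proof -
    have "adjoint A (u l) \<in> R" unfolding R_def using that by (intro span_base) auto
    then have "x \<bullet> adjoint A (u l) = 0" using xQ by (auto simp: Q_def orthogonal_def inner_commute)
    then show ?thesis by (simp add: adj)
  qed
  have xw: "x \<bullet> w i = 0" if "k < i" "i < DIM('a)" for i
  proof -
    have "orthogonal (w i) x"
      using xP unfolding P_def
      by (rule orthogonal_to_span) (use that k in \<open>auto simp: orthogonal_def onfD[OF w]\<close>)
    then show ?thesis by (simp add: orthogonal_def inner_commute)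
  qed
  have "\<mu> k * (norm x)\<^sup>2 = (\<Sum>i<DIM('a). \<mu> k * (x \<bullet> w i)\<^sup>2)"
    by (simp add: onf_norm2[OF w] sum_distrib_left)
  also have "\<dots> \<le> (\<Sum>i<DIM('a). \<mu> i * (x \<bullet> w i)\<^sup>2)"
  proof (rule sum_mono)
    fix i assume "i \<in> {..<DIM('a)}"
    then show "\<mu> k * (x \<bullet> w i)\<^sup>2 \<le> \<mu> i * (x \<bullet> w i)\<^sup>2"
      using sorted[of i k] xw[of i] k by (cases "i \<le> k") (auto intro: mult_right_mono)
  qed
  also have "\<dots> = (norm (A x))\<^sup>2" by (simp add: normA2)
  also have "\<dots> = (lam ^ (DIM('a) - k))\<^sup>2 * ((norm (A x))\<^sup>2 / (lam ^ (DIM('a) - k))\<^sup>2)"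
    using lam1 by simp
  also have "\<dots> \<le> (lam ^ (DIM('a) - k))\<^sup>2 * eqf u lam (A x)"
    by (intro mult_left_mono eqf_ge[OF u lam1]) (use Axu in auto)
  also have "\<dots> \<le> (lam ^ (DIM('a) - k))\<^sup>2 * (norm x)\<^sup>2"
    by (intro mult_left_mono contain2) simp
  finally show ?thesis using x0 by simp
qed

end


lemma orth_decomp:
  fixes F :: "'a::euclidean_space set"
  assumes "subspace F"
  obtains f h where "f \<in> F" "h \<in> F\<^sup>\<bottom>" "y = f + h"
proof -
  have "y \<in> F + F\<^sup>\<bottom>" using subspace_sum_orthogonal_comp[OF assms] by simp
  then obtain f h where "f \<in> F" "h \<in> F\<^sup>\<bottom>" "y = f + h" by (auto elim: set_plus_elim)
  then show ?thesis using that by blast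
qed

lemma orth_comp_inner: "h \<in> F\<^sup>\<bottom> \<Longrightarrow> f \<in> F \<Longrightarrow> h \<bullet> f = 0"
  by (auto simp: orthogonal_comp_def orthogonal_def inner_commute)

lemma orth_comp_Int: "f \<in> F \<Longrightarrow> f \<in> F\<^sup>\<bottom> \<Longrightarrow> f = 0"
  using orth_comp_inner[of f F f] by simp

lemma vec_eq_by_inner: "(\<And>y. (a::'a::real_inner) \<bullet> y = b \<bullet> y) \<Longrightarrow> a = b"
  by (metis inner_diff_left inner_eq_zero_iff right_minus_eq)

lemma dim_orth_comp:
  fixes F :: "'a::euclidean_space set"
  assumes "subspace F"
  shows "dim (F\<^sup>\<bottom>) + dim F = DIM('a)"
proof -
  have "dim {y \<in> UNIV. \<forall>x\<in>F. orthogonal x y} + dim F = dim (UNIV :: 'a set)"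
    by (rule dim_subspace_orthogonal_to_vectors) (use assms in auto)
  moreover have "{y \<in> UNIV. \<forall>x\<in>F. orthogonal x y} = F\<^sup>\<bottom>"
    by (auto simp: orthogonal_comp_def)
  ultimately show ?thesis by (simp add: dim_UNIV)
qed

context ctx
begin

lemma adjW: "g \<in> F\<^sup>\<bottom> \<Longrightarrow> adjoint A g = c *\<^sub>R g"
proof (rule vec_eq_by_inner)
  fix y assume g: "g \<in> F\<^sup>\<bottom>"
  obtain f h where f: "f \<in> F" and h: "h \<in> F\<^sup>\<bottom>" and y: "y = f + h"
    using orth_decomp[OF subF] by blast
  have Af: "A f \<in> F" using AF f by blast
  have "adjoint A g \<bullet> y = y \<bullet> adjoint A g" by (rule inner_commute)
  also have "\<dots> = A y \<bullet> g" by (rule adj)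
  also have "\<dots> = A f \<bullet> g + c * (h \<bullet> g)" by (simp add: y linear_add[OF linA] AW[OF h] inner_add_left)
  also have "A f \<bullet> g = 0" using orth_comp_inner[OF g Af] by (simp add: inner_commute)
  finally have 1: "adjoint A g \<bullet> y = c * (h \<bullet> g)" by simp
  have "c *\<^sub>R g \<bullet> y = c * (h \<bullet> g)"
    using orth_comp_inner[OF g f] by (simp add: y inner_add_right inner_commute)
  with 1 show "adjoint A g \<bullet> y = c *\<^sub>R g \<bullet> y" by linarith
qed

lemma adjF: "f \<in> F \<Longrightarrow> adjoint A f \<in> F"
proof -
  assume f: "f \<in> F"
  have "adjoint A f \<in> F\<^sup>\<bottom>\<^sup>\<bottom>"
    unfolding orthogonal_comp_def[of "F\<^sup>\<bottom>"]
  proof (safe)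
    fix h assume h: "h \<in> F\<^sup>\<bottom>"
    have "h \<bullet> adjoint A f = A h \<bullet> f" by (rule adj)
    also have "\<dots> = 0" using orth_comp_inner[OF h f] by (simp add: AW[OF h])
    finally show "orthogonal h (adjoint A f)" by (simp add: orthogonal_def)
  qed
  then show ?thesis using orthogonal_comp_self[OF subF] by simp
qed

lemma AFf: "f \<in> F \<Longrightarrow> A f \<in> F" using AF by blast

lemma eig_in_F:
  assumes i: "i < DIM('a)" and ne: "\<mu> i \<noteq> c\<^sup>2"
  shows "w i \<in> F"
proof -
  obtain f h where f: "f \<in> F" and h: "h \<in> F\<^sup>\<bottom>" and wi: "w i = f + h"
    using orth_decomp[OF subF] by blast
  have Sh: "adjoint A (A h) = c\<^sup>2 *\<^sub>R h"
    using AW[OF h] adjW[OF h] h subspace_orthogonal_comp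
    by (simp add: linear_scale[OF adjoint_linear[OF linA]] power2_eq_square subspace_scale)
  have Sf: "adjoint A (A f) \<in> F" using adjF AFf f by blast
  have "adjoint A (A f) + c\<^sup>2 *\<^sub>R h = \<mu> i *\<^sub>R f + \<mu> i *\<^sub>R h"
    using eig[OF i] by (simp add: wi linear_add[OF linA] linear_add[OF adjoint_linear[OF linA]] Sh scaleR_add_right)
  then have eq: "adjoint A (A f) - \<mu> i *\<^sub>R f = (\<mu> i - c\<^sup>2) *\<^sub>R h"
    by (simp add: algebra_simps)
  have "adjoint A (A f) - \<mu> i *\<^sub>R f \<in> F"
    using Sf f subF by (simp add: subspace_diff subspace_scale)
  moreover have "(\<mu> i - c\<^sup>2) *\<^sub>R h \<in> F\<^sup>\<bottom>"
    using h by (simp add: subspace_scale subspace_orthogonal_comp)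
  ultimately have "(\<mu> i - c\<^sup>2) *\<^sub>R h = 0" using eq orth_comp_Int by metis
  then have "h = 0" using ne by simp
  then show ?thesis using wi f by simp
qed

definition J :: "nat set" where "J = {i. i < DIM('a) \<and> \<mu> i = c\<^sup>2}"

lemma J_sub: "J \<subseteq> {..<DIM('a)}" by (auto simp: J_def)

lemma finite_J: "finite J" using J_sub finite_subset by blast

lemma notJ_in_F: "i < DIM('a) \<Longrightarrow> i \<notin> J \<Longrightarrow> w i \<in> F"
  by (rule eig_in_F) (auto simp: J_def)

lemma W_sub_span: "F\<^sup>\<bottom> \<subseteq> span (w ` J)"
proof
  fix g assume g: "g \<in> F\<^sup>\<bottom>"
  have "g = (\<Sum>i<DIM('a). (g \<bullet> w i) *\<^sub>R w i)" by (rule onf_expand[OF w])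
  also have "\<dots> \<in> span (w ` J)"
  proof (rule span_sum)
    fix i assume i: "i \<in> {..<DIM('a)}"
    show "(g \<bullet> w i) *\<^sub>R w i \<in> span (w ` J)"
    proof (cases "i \<in> J")
      case True
      then show ?thesis by (intro span_scale span_base) auto
    next
      case False
      then have "g \<bullet> w i = 0" using orth_comp_inner[OF g notJ_in_F] i by auto
      then show ?thesis by (simp add: span_zero)
    qed
  qed
  finally show "g \<in> span (w ` J)" .
qed

lemma card_J_ge: "dim (F\<^sup>\<bottom>) \<le> card J"
proof -
  have "dim (F\<^sup>\<bottom>) \<le> dim (span (w ` J))" by (rule dim_subset[OF W_sub_span])
  also have "\<dots> = card J" by (rule dim_span_onf[OF w J_sub])
  finally show ?thesis .
qed

lemma J_interval: "a \<in> J \<Longrightarrow> b \<in> J \<Longrightarrow> a \<le> k \<Longrightarrow> k \<le> b \<Longrightarrow> k \<in> J"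
proof -
  assume a: "a \<in> J" and b: "b \<in> J" and ak: "a \<le> k" and kb: "k \<le> b"
  have bn: "b < DIM('a)" using b by (simp add: J_def)
  have "\<mu> k \<le> \<mu> a" using sorted[OF ak] kb bn by simp
  moreover have "\<mu> b \<le> \<mu> k" using sorted[OF kb bn] .
  ultimately show "k \<in> J" using a b kb bn by (auto simp: J_def)
qed

definition \<sigma> :: "nat \<Rightarrow> real" where "\<sigma> i = sqrt (\<mu> i)"
definition v :: "nat \<Rightarrow> 'a" where "v i = (1 / \<sigma> i) *\<^sub>R A (w i)"

lemma sigma_pos: "i < DIM('a) \<Longrightarrow> \<sigma> i > 0"
  using mu_pos by (simp add: \<sigma>_def)

lemma sigma_sq: "i < DIM('a) \<Longrightarrow> (\<sigma> i)\<^sup>2 = \<mu> i"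
  using mu_pos by (simp add: \<sigma>_def less_imp_le)

lemma onf_v: "onf v"
  unfolding onf_def
proof (intro allI impI)
  fix i j assume i: "i < DIM('a)" and j: "j < DIM('a)"
  show "v i \<bullet> v j = (if i = j then 1 else 0)"
    using Aw_inner[OF i j] sigma_sq[OF i] sigma_pos[OF i] sigma_pos[OF j]
    by (auto simp: v_def power2_eq_square)
qed

lemma Ax_v: "k < DIM('a) \<Longrightarrow> A x \<bullet> v k = \<sigma> k * (x \<bullet> w k)"
proof -
  assume k: "k < DIM('a)"
  have "A x \<bullet> v k = (A x \<bullet> A (w k)) / \<sigma> k" by (simp add: v_def)
  also have "\<dots> = (\<sigma> k)\<^sup>2 * (x \<bullet> w k) / \<sigma> k" using Ax_Aw[OF k, of x] sigma_sq[OF k] by simp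
  also have "\<dots> = \<sigma> k * (x \<bullet> w k)" using sigma_pos[OF k] by (simp add: power2_eq_square)
  finally show ?thesis .
qed

lemma A_ellmap: "A x = ellmap v \<sigma> (frame_map w v x)"
  by (rule onf_eqI[OF onf_v]) (simp add: Ax_v ellmap_inner[OF onf_v] frame_map_inner[OF onf_v])

lemma vol_A: "measure lebesgue (A ` cball 0 1) = (\<Prod>i<DIM('a). \<sigma> i) * measure lebesgue (cball (0::'a) 1)"
proof -
  have "A ` cball 0 1 = ellmap v \<sigma> ` (frame_map w v ` cball 0 1)"
    by (simp add: image_image A_ellmap)
  also have "\<dots> = ellmap v \<sigma> ` cball 0 1" by (simp add: frame_map_cball[OF w onf_v])
  finally show ?thesis using vol_ellmap[OF onf_v sigma_pos] by simp
qed

end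


lemma prod_eq_one_each:
  fixes f :: "nat \<Rightarrow> real"
  assumes fin: "finite I" and bnd: "\<And>i. i \<in> I \<Longrightarrow> 0 < f i \<and> f i \<le> 1" and ge: "prod f I \<ge> 1"
    and i0: "i0 \<in> I"
  shows "f i0 = 1"
proof -
  have "prod f I = f i0 * prod f (I - {i0})" using fin i0 by (simp add: prod.remove)
  moreover have "prod f (I - {i0}) \<le> 1"
  proof (rule prod_le_1)
    fix x assume "x \<in> I - {i0}"
    then show "0 \<le> f x \<and> f x \<le> 1" using bnd[of x] by auto
  qed
  moreover have "prod f (I - {i0}) \<ge> 0"
  proof (rule prod_nonneg)
    fix x assume "x \<in> I - {i0}"
    then show "0 \<le> f x" using bnd[of x] by auto
  qed
  ultimately have "prod f I \<le> f i0" using bnd[OF i0]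
    by (metis mult_left_le less_imp_le)
  then show ?thesis using ge bnd[OF i0] by linarith
qed

lemma gauss_interval: "2 * (\<Sum>i\<in>{a..a+k}. (a + k - i)) = k * (k + 1::nat)"
proof (induction k)
  case 0 then show ?case by simp
next
  case (Suc k)
  have "{a..a + Suc k} = insert (a + Suc k) {a..a+k}" by auto
  then have "(\<Sum>i\<in>{a..a+Suc k}. (a + Suc k - i)) = (\<Sum>i\<in>{a..a+k}. (a + Suc k - i))"
    by simp
  also have "\<dots> = (\<Sum>i\<in>{a..a+k}. (a + k - i) + 1)"
    by (rule sum.cong) auto
  also have "\<dots> = (\<Sum>i\<in>{a..a+k}. (a + k - i)) + (\<Sum>i\<in>{a..a+k}. (1::nat))"
    by (rule sum.distrib)
  also have "(\<Sum>i\<in>{a..a+k}. (1::nat)) = k + 1" by simp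
  finally show ?case using Suc.IH by (simp add: algebra_simps)
qed

context ctx
begin

lemma sigma_le: "i < DIM('a) \<Longrightarrow> \<sigma> i \<le> lam ^ (DIM('a) - i)"
proof -
  assume i: "i < DIM('a)"
  have "\<mu> i \<le> (lam ^ (DIM('a) - i))\<^sup>2" by (rule CF[OF i])
  then have "sqrt (\<mu> i) \<le> sqrt ((lam ^ (DIM('a) - i))\<^sup>2)" by (rule real_sqrt_le_mono)
  then show ?thesis using lam1 by (simp add: \<sigma>_def)
qed

lemma sigma_J: "i \<in> J \<Longrightarrow> \<sigma> i = \<bar>c\<bar>"
  by (simp add: J_def \<sigma>_def)

definition jmin where "jmin = Min J"
definition jmax where "jmax = Max J"

context
  assumes dW: "2 \<le> dim (F\<^sup>\<bottom>)"
begin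

lemma card_J2: "2 \<le> card J" using dW card_J_ge by linarith

lemma J_ne: "J \<noteq> {}" using card_J2 by auto

lemma jmin_J: "jmin \<in> J" and jmax_J: "jmax \<in> J"
  using J_ne finite_J by (auto simp: jmin_def jmax_def)

lemma J_eq: "J = {jmin..jmax}"
proof
  show "J \<subseteq> {jmin..jmax}" using finite_J by (auto simp: jmin_def jmax_def)
  show "{jmin..jmax} \<subseteq> J" using J_interval[OF jmin_J jmax_J] by auto
qed

lemma jmax_lt: "jmax < DIM('a)" using jmax_J by (simp add: J_def)

lemma card_J: "card J = Suc jmax - jmin" by (simp add: J_eq)

lemma jmin_lt_jmax: "jmin < jmax" using card_J card_J2 by linarith

lemma abs_c_le: "\<bar>c\<bar> \<le> lam ^ (DIM('a) - jmax)"
  using sigma_le[OF jmax_lt] sigma_J[OF jmax_J] by simp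

definition bnd :: "nat \<Rightarrow> real" where
  "bnd i = (if i \<in> J then lam ^ (DIM('a) - jmax) else lam ^ (DIM('a) - i))"

lemma sigma_le_bnd: "i < DIM('a) \<Longrightarrow> \<sigma> i \<le> bnd i"
  using sigma_le abs_c_le sigma_J by (auto simp: bnd_def)

lemma bnd_pos: "bnd i > 0" using lam1 by (simp add: bnd_def)

definition T :: nat where "T = (\<Sum>i\<in>J. jmax - i)"

lemma T_formula: "2 * T = (card J - 1) * card J"
proof -
  have "J = {jmin..jmin + (jmax - jmin)}" using J_eq jmin_lt_jmax by simp
  then have "2 * T = (jmax - jmin) * (jmax - jmin + 1)"
    using gauss_interval[of jmin "jmax - jmin"] jmin_lt_jmax by (simp add: T_def)
  then show ?thesis using card_J jmin_lt_jmax by (simp add: Suc_diff_le mult.commute)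
qed

lemma T_ge1: "1 \<le> T"
proof -
  have "T \<ge> jmax - jmin" unfolding T_def
    using finite_J jmin_J by (metis member_le_sum zero_le)
  then show ?thesis using jmin_lt_jmax by linarith
qed

lemma prod_bnd: "(\<Prod>i<DIM('a). bnd i) * lam ^ T = (\<Prod>i<DIM('a). lam ^ (DIM('a) - i))"
proof -
  have "(\<Prod>i<DIM('a). lam ^ (DIM('a) - i)) = (\<Prod>i<DIM('a). bnd i * (if i \<in> J then lam ^ (jmax - i) else 1))"
  proof (rule prod.cong)
    fix i assume "i \<in> {..<DIM('a)}"
    show "lam ^ (DIM('a) - i) = bnd i * (if i \<in> J then lam ^ (jmax - i) else 1)"
    proof (cases "i \<in> J")
      case True
      then have "i \<le> jmax" using J_eq by auto
      then have "DIM('a) - i = (DIM('a) - jmax) + (jmax - i)" using jmax_lt by linarith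
      then show ?thesis using True by (simp add: bnd_def power_add)
    qed (simp add: bnd_def)
  qed simp
  also have "\<dots> = (\<Prod>i<DIM('a). bnd i) * (\<Prod>i<DIM('a). (if i \<in> J then lam ^ (jmax - i) else 1))"
    by (simp add: prod.distrib)
  also have "(\<Prod>i<DIM('a). (if i \<in> J then lam ^ (jmax - i) else 1)) = (\<Prod>i\<in>J. lam ^ (jmax - i))"
    using J_sub by (simp add: prod.If_cases Int_absorb1 Int_commute)
  also have "\<dots> = lam ^ T" by (simp add: T_def power_sum)
  finally show ?thesis by simp
qed

end

end


context ctx
begin

context
  assumes dW: "2 \<le> dim (F\<^sup>\<bottom>)"
begin

lemma prod_sigma_le: "(\<Prod>i<DIM('a). \<sigma> i) * lam ^ T \<le> (\<Prod>i<DIM('a). lam ^ (DIM('a) - i))"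
proof -
  have "(\<Prod>i<DIM('a). \<sigma> i) \<le> (\<Prod>i<DIM('a). bnd i)"
    by (rule prod_mono) (use sigma_pos sigma_le_bnd dW in \<open>auto intro: less_imp_le\<close>)
  then have "(\<Prod>i<DIM('a). \<sigma> i) * lam ^ T \<le> (\<Prod>i<DIM('a). bnd i) * lam ^ T"
    using lam1 by (intro mult_right_mono) auto
  then show ?thesis using prod_bnd[OF dW] by simp
qed

lemma part1_core: "(\<Prod>i<DIM('a). \<sigma> i) * lam \<le> (\<Prod>i<DIM('a). lam ^ (DIM('a) - i))"
proof -
  have "lam \<le> lam ^ T" using lam1 T_ge1[OF dW] by (metis power_increasing power_one_right)
  moreover have "(\<Prod>i<DIM('a). \<sigma> i) \<ge> 0" by (rule prod_nonneg) (simp add: sigma_pos less_imp_le)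
  ultimately have "(\<Prod>i<DIM('a). \<sigma> i) * lam \<le> (\<Prod>i<DIM('a). \<sigma> i) * lam ^ T"
    by (intro mult_left_mono)
  then show ?thesis using prod_sigma_le by linarith
qed

context
  fixes T0 :: nat
  assumes lam_gt: "lam > 1"
    and T0: "2 * T0 = (dim (F\<^sup>\<bottom>) - 1) * dim (F\<^sup>\<bottom>)"
    and compet: "(\<Prod>i<DIM('a). lam ^ (DIM('a) - i)) \<le> (\<Prod>i<DIM('a). \<sigma> i) * lam ^ T0"
begin

lemma T_le_T0: "T \<le> T0"
proof -
  define P where "P = (\<Prod>i<DIM('a). lam ^ (DIM('a) - i))"
  have "(\<Prod>i<DIM('a). \<sigma> i) * lam ^ T \<le> (\<Prod>i<DIM('a). \<sigma> i) * lam ^ T0"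
    using prod_sigma_le compet by linarith
  moreover have "(\<Prod>i<DIM('a). \<sigma> i) > 0" by (rule prod_pos) (simp add: sigma_pos)
  ultimately have "lam ^ T \<le> lam ^ T0" by simp
  then show ?thesis using lam_gt by (simp add: power_le_imp_le_exp)
qed

lemma card_J_eq: "card J = dim (F\<^sup>\<bottom>)"
proof (rule ccontr)
  assume "card J \<noteq> dim (F\<^sup>\<bottom>)"
  then have gt: "card J \<ge> dim (F\<^sup>\<bottom>) + 1" using card_J_ge by linarith
  have "(card J - 1) * card J \<ge> dim (F\<^sup>\<bottom>) * (dim (F\<^sup>\<bottom>) + 1)"
    using gt by (intro mult_le_mono) auto
  moreover have "dim (F\<^sup>\<bottom>) * (dim (F\<^sup>\<bottom>) + 1) > (dim (F\<^sup>\<bottom>) - 1) * dim (F\<^sup>\<bottom>)"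
    using dW by (simp add: algebra_simps)
  ultimately have "2 * T > 2 * T0" using T_formula[OF dW] T0 by linarith
  then show False using T_le_T0 by linarith
qed

lemma T_eq: "T = T0"
  using T_formula[OF dW] T0 card_J_eq by simp

lemma sigma_eq_bnd: "i < DIM('a) \<Longrightarrow> \<sigma> i = bnd i"
proof -
  assume i: "i < DIM('a)"
  define f where "f k = \<sigma> k / bnd k" for k
  have fb: "0 < f k \<and> f k \<le> 1" if "k \<in> {..<DIM('a)}" for k
    using that sigma_pos sigma_le_bnd[OF dW] bnd_pos[OF dW] by (auto simp: f_def)
  have "(\<Prod>i<DIM('a). bnd i) * lam ^ T \<le> (\<Prod>i<DIM('a). \<sigma> i) * lam ^ T"
    using prod_bnd[OF dW] compet T_eq by simp
  then have "(\<Prod>i<DIM('a). bnd i) \<le> (\<Prod>i<DIM('a). \<sigma> i)" using lam_gt by simp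
  moreover have "(\<Prod>i<DIM('a). bnd i) > 0" by (rule prod_pos) (simp add: bnd_pos[OF dW])
  ultimately have "prod f {..<DIM('a)} \<ge> 1"
    by (simp add: f_def prod_dividef)
  then have "f i = 1" using prod_eq_one_each[of "{..<DIM('a)}" f i] fb i by auto
  then show ?thesis using bnd_pos[OF dW, of i] by (simp add: f_def)
qed

lemma abs_c_eq: "\<bar>c\<bar> = lam ^ (DIM('a) - jmax)"
  using sigma_eq_bnd[OF jmax_lt[OF dW]] sigma_J[OF jmax_J[OF dW]] jmax_J[OF dW]
  by (simp add: bnd_def[OF dW])

lemma sigma_notJ: "i < DIM('a) \<Longrightarrow> i \<notin> J \<Longrightarrow> \<sigma> i = lam ^ (DIM('a) - i)"
  using sigma_eq_bnd by (simp add: bnd_def[OF dW])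

lemma mu_notJ: "i < DIM('a) \<Longrightarrow> i \<notin> J \<Longrightarrow> \<mu> i = (lam ^ (DIM('a) - i))\<^sup>2"
  using sigma_notJ sigma_sq by metis

lemma Aw_ne0: "i < DIM('a) \<Longrightarrow> A (w i) \<noteq> 0"
  using mu_pos Aw_inner by (metis inner_zero_left less_irrefl)

lemma top_rigid:
  shows "i < jmin \<Longrightarrow> \<exists>t. A (w i) = t *\<^sub>R u (DIM('a) - 1 - i)"
proof (induction i rule: less_induct)
  case (less i)
  have i: "i < DIM('a)" using less.prems jmax_lt[OF dW] jmin_lt_jmax[OF dW] by linarith
  have iJ: "i \<notin> J" using less.prems J_eq[OF dW] by auto
  define y where "y = A (w i)"
  define p where "p = DIM('a) - 1 - i"
  have p: "p < DIM('a)" using i by (simp add: p_def)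
  have ny: "(norm y)\<^sup>2 = (lam ^ (DIM('a) - i))\<^sup>2"
    using Aw_inner[OF i i] mu_notJ[OF i iJ] by (simp add: y_def power2_norm_eq_inner)
  have hi: "y \<bullet> u l = 0" if "p < l" "l < DIM('a)" for l
  proof -
    define i' where "i' = DIM('a) - 1 - l"
    have i'i: "i' < i" using that by (simp add: i'_def p_def)
    have l: "l = DIM('a) - 1 - i'" using that by (simp add: i'_def)
    obtain t where t: "A (w i') = t *\<^sub>R u l" using less.IH[of i'] i'i less.prems l by auto
    have i'n: "i' < DIM('a)" using i'i i by simp
    have "t \<noteq> 0" using t Aw_ne0[OF i'n] by auto
    moreover have "y \<bullet> (t *\<^sub>R u l) = 0" using Aw_inner[OF i i'n] i'i t by (simp add: y_def)
    ultimately show ?thesis by simp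
  qed
  have ey: "eqf u lam y \<le> 1" unfolding y_def by (rule contain) (simp add: onf_norm[OF w i])
  define g where "g l = (y \<bullet> u l)\<^sup>2 * (1 / (lam ^ (l + 1))\<^sup>2 - 1 / (lam ^ (DIM('a) - i))\<^sup>2)" for l
  have g_nonneg: "g l \<ge> 0" if "l < DIM('a)" for l
  proof (cases "l \<le> p")
    case True
    then have "lam ^ (l + 1) \<le> lam ^ (DIM('a) - i)" using lam1 p by (intro power_increasing) (use i in \<open>auto simp: p_def\<close>)
    then have "(lam ^ (l + 1))\<^sup>2 \<le> (lam ^ (DIM('a) - i))\<^sup>2" using lam1 by (intro power_mono) auto
    then have "1 / (lam ^ (DIM('a) - i))\<^sup>2 \<le> 1 / (lam ^ (l + 1))\<^sup>2" using lam1
      by (intro divide_left_mono) auto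
    then show ?thesis by (simp add: g_def)
  next
    case False
    then show ?thesis using hi that by (simp add: g_def)
  qed
  have "(\<Sum>l<DIM('a). g l) = eqf u lam y - (norm y)\<^sup>2 / (lam ^ (DIM('a) - i))\<^sup>2"
    by (simp add: g_def eqf_def onf_norm2[OF u] sum_subtractf sum_divide_distrib algebra_simps)
  also have "\<dots> \<le> 0" using ey ny lam1 by simp
  finally have "(\<Sum>l<DIM('a). g l) \<le> 0" .
  then have g0: "g l = 0" if "l < DIM('a)" for l
    using sum_nonneg_eq_0_iff[of "{..<DIM('a)}" g] g_nonneg that
    by (metis finite_lessThan lessThan_iff order_antisym sum_nonneg)
  have lo: "y \<bullet> u l = 0" if "l < p" for l
  proof -
    have "lam ^ (l + 1) < lam ^ (DIM('a) - i)" using lam_gt that p by (intro power_strict_increasing) (auto simp: p_def)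
    then have "(lam ^ (l + 1))\<^sup>2 < (lam ^ (DIM('a) - i))\<^sup>2" using lam1 by (intro power_strict_mono) auto
    then have "1 / (lam ^ (DIM('a) - i))\<^sup>2 < 1 / (lam ^ (l + 1))\<^sup>2" using lam1
      by (intro divide_strict_left_mono) auto
    then have "1 / (lam ^ (l + 1))\<^sup>2 - 1 / (lam ^ (DIM('a) - i))\<^sup>2 \<noteq> 0" by linarith
    moreover have "g l = 0" using g0[of l] that p by simp
    ultimately show ?thesis by (simp add: g_def)
  qed
  have "y = (y \<bullet> u p) *\<^sub>R u p"
  proof (rule onf_eqI[OF u])
    fix l assume l: "l < DIM('a)"
    show "y \<bullet> u l = (y \<bullet> u p) *\<^sub>R u p \<bullet> u l"
      using onfD[OF u p l] hi[OF _ l] lo[of l] by (cases "l = p"; cases "l < p") auto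
  qed
  then show ?case by (auto simp: y_def p_def)
qed

end

end

end


lemma eqf_unit:
  assumes u: "onf (u :: nat \<Rightarrow> 'a::euclidean_space)" and p: "p < DIM('a)"
  shows "eqf u lam (u p) = 1 / (lam ^ (p + 1))\<^sup>2"
proof -
  have "eqf u lam (u p) = (\<Sum>l<DIM('a). if l = p then 1 / (lam ^ (p + 1))\<^sup>2 else 0)"
    unfolding eqf_def by (rule sum.cong) (use onfD[OF u p] in auto)
  also have "\<dots> = 1 / (lam ^ (p + 1))\<^sup>2" using p by simp
  finally show ?thesis .
qed

context ctx
begin

lemma Aw_sigma_v: "i < DIM('a) \<Longrightarrow> A (w i) = \<sigma> i *\<^sub>R v i"
  using sigma_pos[of i] by (simp add: v_def)

lemma adjA_norm2: "(norm (adjoint A z))\<^sup>2 = (\<Sum>k<DIM('a). \<mu> k * (z \<bullet> v k)\<^sup>2)"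
proof -
  have "(norm (adjoint A z))\<^sup>2 = (\<Sum>k<DIM('a). (adjoint A z \<bullet> w k)\<^sup>2)" by (rule onf_norm2[OF w])
  also have "\<dots> = (\<Sum>k<DIM('a). \<mu> k * (z \<bullet> v k)\<^sup>2)"
  proof (rule sum.cong)
    fix k assume k: "k \<in> {..<DIM('a)}"
    have "adjoint A z \<bullet> w k = w k \<bullet> adjoint A z" by (rule inner_commute)
    also have "\<dots> = A (w k) \<bullet> z" by (rule adj)
    also have "\<dots> = \<sigma> k * (z \<bullet> v k)" using k by (simp add: Aw_sigma_v inner_commute)
    finally show "(adjoint A z \<bullet> w k)\<^sup>2 = \<mu> k * (z \<bullet> v k)\<^sup>2"
      using sigma_sq[of k] k by (simp add: power_mult_distrib)
  qed simp
  finally show ?thesis .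
qed

lemma adjA_norm_le:
  assumes l: "l < DIM('a)"
  shows "norm (adjoint A (u l)) \<le> lam ^ (l + 1)"
proof (cases "adjoint A (u l) = 0")
  case True then show ?thesis using lam1 by simp
next
  case False
  define a where "a = adjoint A (u l)"
  define x where "x = a /\<^sub>R norm a"
  have a0: "a \<noteq> 0" using False by (simp add: a_def)
  have e1: "eqf u lam (A x) \<le> 1" by (rule contain) (use a0 in \<open>simp add: x_def\<close>)
  have e2: "(A x \<bullet> u l)\<^sup>2 / (lam ^ (l + 1))\<^sup>2 \<le> eqf u lam (A x)"
    unfolding eqf_def using l by (intro member_le_sum) auto
  have e3: "A x \<bullet> u l = norm a"
  proof -
    have "A x \<bullet> u l = x \<bullet> a" by (simp add: a_def adj)
    also have "\<dots> = norm a" using a0 by (simp add: x_def power2_norm_eq_inner[symmetric] power2_eq_square)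
    finally show ?thesis .
  qed
  have "(norm a)\<^sup>2 / (lam ^ (l + 1))\<^sup>2 \<le> 1" using e1 e2 unfolding e3 by linarith
  moreover have "(lam ^ (l + 1))\<^sup>2 > 0" using lam1 by simp
  ultimately have "(norm a)\<^sup>2 \<le> (lam ^ (l + 1))\<^sup>2" by (simp add: divide_le_eq)
  then have "norm a \<le> lam ^ (l + 1)" by (rule power2_le_imp_le) (use lam1 in simp)
  then show ?thesis by (simp add: a_def)
qed

context
  assumes dW: "2 \<le> dim (F\<^sup>\<bottom>)"
begin

context
  fixes T0 :: nat
  assumes lam_gt: "lam > 1"
    and T0: "2 * T0 = (dim (F\<^sup>\<bottom>) - 1) * dim (F\<^sup>\<bottom>)"
    and compet: "(\<Prod>i<DIM('a). lam ^ (DIM('a) - i)) \<le> (\<Prod>i<DIM('a). \<sigma> i) * lam ^ T0"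
begin

lemmas SE = sigma_notJ[OF dW lam_gt T0 compet] mu_notJ[OF dW lam_gt T0 compet]
  abs_c_eq[OF dW lam_gt T0 compet] top_rigid[OF dW lam_gt T0 compet]
  card_J_eq[OF dW lam_gt T0 compet]

lemma sigma_prev:
  assumes "jmax < i" "i < DIM('a)"
  shows "\<sigma> (i - 1) = lam ^ (DIM('a) - i + 1)"
proof (cases "i - 1 \<in> J")
  case True
  then have ij: "i - 1 = jmax" using assms J_eq[OF dW] by auto
  then have "DIM('a) - jmax = DIM('a) - i + 1" using assms by linarith
  then show ?thesis using SE(3) sigma_J[OF True] ij by simp
next
  case False
  then show ?thesis using SE(1)[of "i - 1"] assms by (simp add: Suc_diff_le)
qed

lemma mu_strict:
  assumes "jmax < i" "i < DIM('a)" "k < i"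
  shows "\<mu> i < \<mu> k"
proof -
  have iJ: "i \<notin> J" using assms J_eq[OF dW] by auto
  have "\<sigma> i < \<sigma> (i - 1)"
    using SE(1)[OF assms(2) iJ] sigma_prev[OF assms(1,2)] lam_gt
    by (simp add: power_strict_increasing)
  then have "\<mu> i < \<mu> (i - 1)"
    using sigma_sq[of i] sigma_sq[of "i - 1"] sigma_pos[of i] assms
    by (metis diff_le_self le_less_trans power_strict_mono zero_le_numeral zero_less_numeral less_imp_le)
  moreover have "\<mu> (i - 1) \<le> \<mu> k" using sorted[of k "i - 1"] assms by simp
  ultimately show ?thesis by simp
qed

lemma bot_rigid:
  shows "jmax < i \<Longrightarrow> i < DIM('a) \<Longrightarrow> \<exists>t. u (DIM('a) - 1 - i) = t *\<^sub>R A (w i)"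
proof (induction "DIM('a) - i" arbitrary: i rule: less_induct)
  case less
  note i = less.prems(2)
  have iJ: "i \<notin> J" using less.prems J_eq[OF dW] by auto
  define l where "l = DIM('a) - 1 - i"
  define z where "z = u l"
  have l: "l < DIM('a)" using i by (simp add: l_def)
  have zk: "z \<bullet> v k = 0" if ik: "i < k" and kn: "k < DIM('a)" for k
  proof -
    have lt: "DIM('a) - k < DIM('a) - i" using ik kn by linarith
    have jk: "jmax < k" using ik less.prems by linarith
    obtain t where t: "u (DIM('a) - 1 - k) = t *\<^sub>R A (w k)"
      using less.hyps[OF lt jk kn] by blast
    have k1: "DIM('a) - 1 - k < DIM('a)" using that by simp
    have "t \<noteq> 0" using t onf_norm[OF u k1] by auto
    then have "A (w k) = (1 / t) *\<^sub>R u (DIM('a) - 1 - k)" using t by simp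
    moreover have "z \<bullet> u (DIM('a) - 1 - k) = 0"
      using onfD[OF u l k1] that by (simp add: z_def l_def)
    ultimately have "z \<bullet> A (w k) = 0" by simp
    then show ?thesis using Aw_sigma_v[OF that(2)] sigma_pos[OF that(2)] by simp
  qed
  have "(norm (adjoint A z))\<^sup>2 \<le> (lam ^ (l + 1))\<^sup>2"
    using adjA_norm_le[OF l] by (simp add: z_def power_mono)
  also have "(lam ^ (l + 1))\<^sup>2 = \<mu> i" using SE(2)[OF i iJ] i by (simp add: l_def Suc_diff_Suc)
  finally have 1: "(\<Sum>k<DIM('a). \<mu> k * (z \<bullet> v k)\<^sup>2) \<le> \<mu> i" by (simp add: adjA_norm2)
  have 2: "(\<Sum>k<DIM('a). (z \<bullet> v k)\<^sup>2) = 1"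
    using onf_norm2[OF onf_v, of z] onf_norm[OF u l] by (simp add: z_def)
  define g where "g k = (\<mu> k - \<mu> i) * (z \<bullet> v k)\<^sup>2" for k
  have gs: "(\<Sum>k<DIM('a). g k) \<le> 0"
  proof -
    have "(\<Sum>k<DIM('a). g k) = (\<Sum>k<DIM('a). \<mu> k * (z \<bullet> v k)\<^sup>2) - \<mu> i * (\<Sum>k<DIM('a). (z \<bullet> v k)\<^sup>2)"
      by (simp add: g_def algebra_simps sum_subtractf sum_distrib_left)
    then show ?thesis using 1 2 by simp
  qed
  have gn: "g k \<ge> 0" if "k < DIM('a)" for k
  proof (cases "k < i")
    case True then show ?thesis using mu_strict[OF less.prems True] by (simp add: g_def)
  next
    case False
    then show ?thesis using zk[of k] that by (cases "k = i") (auto simp: g_def)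
  qed
  have g0: "g k = 0" if "k < DIM('a)" for k
    using sum_nonneg_eq_0_iff[of "{..<DIM('a)}" g] gn gs that
    by (metis finite_lessThan lessThan_iff order_antisym sum_nonneg)
  have zlo: "z \<bullet> v k = 0" if "k < i" for k
    using g0[of k] mu_strict[OF less.prems that] that i by (simp add: g_def)
  have "z = (z \<bullet> v i) *\<^sub>R v i"
  proof (rule onf_eqI[OF onf_v])
    fix k assume k: "k < DIM('a)"
    show "z \<bullet> v k = (z \<bullet> v i) *\<^sub>R v i \<bullet> v k"
      using onfD[OF onf_v i k] zk[OF _ k] zlo[of k] by (cases "k = i"; cases "k < i") auto
  qed
  then have "z = ((z \<bullet> v i) / \<sigma> i) *\<^sub>R A (w i)" by (simp add: v_def)
  then show ?case by (auto simp: z_def l_def)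
qed

lemma u_in_F: "i < DIM('a) \<Longrightarrow> i \<notin> J \<Longrightarrow> u (DIM('a) - 1 - i) \<in> F"
proof -
  assume i: "i < DIM('a)" and iJ: "i \<notin> J"
  have AwF: "A (w i) \<in> F" using AFf notJ_in_F[OF i iJ] .
  consider "i < jmin" | "jmax < i" using iJ J_eq[OF dW] i by fastforce
  then show ?thesis
  proof cases
    case 1
    then obtain t where t: "A (w i) = t *\<^sub>R u (DIM('a) - 1 - i)" using SE(4) by blast
    have "t \<noteq> 0" using t Aw_ne0[OF dW lam_gt T0 compet i] by auto
    then have "u (DIM('a) - 1 - i) = (1 / t) *\<^sub>R A (w i)" using t by simp
    then show ?thesis using AwF subF by (simp add: subspace_scale)
  next
    case 2
    then obtain t where "u (DIM('a) - 1 - i) = t *\<^sub>R A (w i)" using bot_rigid i by blast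
    then show ?thesis using AwF subF by (simp add: subspace_scale)
  qed
qed

definition K where "K = (\<lambda>i. DIM('a) - 1 - i) ` ({..<DIM('a)} - J)"

lemma K_sub: "K \<subseteq> {..<DIM('a)}" by (auto simp: K_def)

lemma F_span: "F = span (u ` K)"
proof -
  have sub: "span (u ` K) \<subseteq> F"
    by (rule span_minimal) (use u_in_F subF in \<open>auto simp: K_def\<close>)
  have injK: "inj_on (\<lambda>i. DIM('a) - 1 - i) ({..<DIM('a)} - J)"
    by (auto simp: inj_on_def)
  have "card K = card ({..<DIM('a)} - J)" unfolding K_def by (rule card_image[OF injK])
  also have "\<dots> = DIM('a) - card J" using J_sub by (simp add: card_Diff_subset finite_J)
  also have "\<dots> = dim F" using SE(5) dim_orth_comp[OF subF] by simp
  finally have cK: "card K = dim F" .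
  have "dim (span (u ` K)) = card K" by (rule dim_span_onf[OF u K_sub])
  then show ?thesis using sub cK subF
    by (metis order_refl subspace_dim_equal subspace_span)
qed

lemma u_top_in_W: "u (DIM('a) - 1 - jmin) \<in> F\<^sup>\<bottom>"
  unfolding orthogonal_comp_def
proof (safe)
  fix f assume f: "f \<in> F"
  have jn: "jmin < DIM('a)" using jmin_J[OF dW] J_sub by auto
  have "orthogonal (u (DIM('a) - 1 - jmin)) f"
  proof (rule orthogonal_to_span)
    show "f \<in> span (u ` K)" using f F_span by simp
  next
    fix y assume "y \<in> u ` K"
    then obtain i where i: "i < DIM('a)" "i \<notin> J" and y: "y = u (DIM('a) - 1 - i)"
      by (auto simp: K_def)
    have "i \<noteq> jmin" using i jmin_J[OF dW] by auto
    then have "DIM('a) - 1 - i \<noteq> DIM('a) - 1 - jmin" using i jn by linarith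
    then show "orthogonal (u (DIM('a) - 1 - jmin)) y"
      using onfD[OF u, of "DIM('a) - 1 - jmin" "DIM('a) - 1 - i"] i jn y by (simp add: orthogonal_def)
  qed
  then show "orthogonal f (u (DIM('a) - 1 - jmin))" by (simp add: orthogonal_commute)
qed

lemma witness:
  obtains y where "eqf u lam y \<le> 1" "y \<in> F\<^sup>\<bottom>" "lam * \<bar>c\<bar> \<le> norm y"
proof -
  have jn: "jmin < DIM('a)" using jmin_J[OF dW] J_sub by auto
  define p where "p = DIM('a) - 1 - jmin"
  have p: "p < DIM('a)" using jn by (simp add: p_def)
  have p1: "p + 1 = DIM('a) - jmin" using jn by (simp add: p_def)
  define y where "y = lam ^ (DIM('a) - jmin) *\<^sub>R u p"
  have "eqf u lam y = 1"
    using eqf_unit[OF u p, of lam] lam1 unfolding y_def eqf_scale p1[symmetric] by simp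
  moreover have "y \<in> F\<^sup>\<bottom>"
    using u_top_in_W by (simp add: y_def p_def subspace_scale subspace_orthogonal_comp)
  moreover have "lam * \<bar>c\<bar> \<le> norm y"
  proof -
    have "lam * \<bar>c\<bar> = lam ^ (DIM('a) - jmax + 1)" using SE(3) by simp
    also have "\<dots> \<le> lam ^ (DIM('a) - jmin)"
      using lam1 jmin_lt_jmax[OF dW] jmax_lt[OF dW] by (intro power_increasing) auto
    also have "\<dots> = norm y" using onf_norm[OF u p] lam1 by (simp add: y_def)
    finally show ?thesis .
  qed
  ultimately show ?thesis by (intro that[of y]) auto
qed

end

end

end


lemma norm2_ellmap:
  assumes u: "onf (u :: nat \<Rightarrow> 'a::euclidean_space)"
  shows "(norm (ellmap u a x))\<^sup>2 = (\<Sum>i<DIM('a). (a i * (x \<bullet> u i))\<^sup>2)"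
  by (simp add: onf_norm2[OF u] ellmap_inner[OF u])

lemma ellmap_comp:
  assumes u: "onf (u :: nat \<Rightarrow> 'a::euclidean_space)"
  shows "ellmap u a (ellmap u b x) = ellmap u (\<lambda>i. a i * b i) x"
  by (rule onf_eqI[OF u]) (simp add: ellmap_inner[OF u])

lemma ellmap_id:
  assumes u: "onf (u :: nat \<Rightarrow> 'a::euclidean_space)" and "\<And>i. i < DIM('a) \<Longrightarrow> a i = 1"
  shows "ellmap u a x = x"
  by (rule onf_eqI[OF u]) (simp add: ellmap_inner[OF u] assms)

lemma E_ellmap:
  assumes u: "onf (u :: nat \<Rightarrow> 'a::euclidean_space)" and lam: "lam > 0"
  shows "{x. eqf u lam x \<le> 1} = ellmap u (\<lambda>i. lam ^ (i + 1)) ` cball 0 1"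
proof
  show "ellmap u (\<lambda>i. lam ^ (i + 1)) ` cball 0 1 \<subseteq> {x. eqf u lam x \<le> 1}"
  proof
    fix y assume "y \<in> ellmap u (\<lambda>i. lam ^ (i + 1)) ` cball 0 1"
    then obtain x where x: "norm x \<le> 1" and y: "y = ellmap u (\<lambda>i. lam ^ (i + 1)) x" by auto
    have "eqf u lam y = (\<Sum>i<DIM('a). (x \<bullet> u i)\<^sup>2)"
      unfolding eqf_def y using lam by (intro sum.cong) (auto simp: ellmap_inner[OF u] power_mult_distrib)
    also have "\<dots> = (norm x)\<^sup>2" by (simp add: onf_norm2[OF u])
    also have "\<dots> \<le> 1" using x by (simp add: power_le_one)
    finally show "y \<in> {x. eqf u lam x \<le> 1}" by simp
  qed
  show "{x. eqf u lam x \<le> 1} \<subseteq> ellmap u (\<lambda>i. lam ^ (i + 1)) ` cball 0 1"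
  proof
    fix y assume y: "y \<in> {x. eqf u lam x \<le> 1}"
    define x where "x = ellmap u (\<lambda>i. 1 / lam ^ (i + 1)) y"
    have "(norm x)\<^sup>2 = eqf u lam y"
      unfolding x_def norm2_ellmap[OF u] eqf_def by (intro sum.cong) (auto simp: power_divide)
    then have "(norm x)\<^sup>2 \<le> 1" using y by simp
    then have "norm x \<le> 1" by (simp add: power_le_one_iff)
    moreover have "ellmap u (\<lambda>i. lam ^ (i + 1)) x = y"
      unfolding x_def ellmap_comp[OF u] using lam by (intro ellmap_id[OF u]) simp
    ultimately show "y \<in> ellmap u (\<lambda>i. lam ^ (i + 1)) ` cball 0 1" by force
  qed
qed

lemma gauss_lessThan: "2 * (\<Sum>l<m. l) = (m - 1) * (m::nat)"
proof (induction m)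
  case 0 then show ?case by simp
next
  case (Suc m) then show ?case by (cases m) (simp_all add: algebra_simps)
qed

lemma competitor:
  fixes u :: "nat \<Rightarrow> 'a::euclidean_space"
  assumes u: "onf u" and lam: "lam \<ge> 1" and sn: "s \<le> DIM('a)"
  defines "m \<equiv> DIM('a) - s"
  obtains E0 T0 where "ellipsoid_rev_dim s E0" "E0 \<subseteq> {x. eqf u lam x \<le> 1}"
    "2 * T0 = (m - 1) * m"
    "measure lebesgue E0 * lam ^ T0 = (\<Prod>i<DIM('a). lam ^ (i + 1)) * measure lebesgue (cball (0::'a) 1)"
proof -
  define a where "a l = (if l < m then lam else lam ^ (l + 1))" for l
  define A0 where "A0 = ellmap u a"
  define F0 where "F0 = span (u ` {m..<DIM('a)})"
  define E0 where "E0 = (\<lambda>x. A0 x + 0) ` cball 0 1"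
  have apos: "a l > 0" for l using lam by (simp add: a_def)
  have mn: "m \<le> DIM('a)" by (simp add: m_def)
  have sF0: "subspace F0" by (simp add: F0_def)
  have dF0: "dim F0 = s"
    unfolding F0_def by (subst dim_span_onf[OF u]) (auto simp: m_def sn)
  have linA0: "linear A0" by (simp add: A0_def linear_ellmap)
  have bijA0: "bij A0"
  proof (rule o_bij)
    have an: "a i \<noteq> 0" for i using apos[of i] by simp
    show "A0 \<circ> ellmap u (\<lambda>i. 1 / a i) = id"
    proof (rule ext)
      fix x show "(A0 \<circ> ellmap u (\<lambda>i. 1 / a i)) x = id x"
        unfolding comp_def A0_def ellmap_comp[OF u] id_def by (rule ellmap_id[OF u]) (simp add: an)
    qed
    show "ellmap u (\<lambda>i. 1 / a i) \<circ> A0 = id"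
    proof (rule ext)
      fix x show "(ellmap u (\<lambda>i. 1 / a i) \<circ> A0) x = id x"
        unfolding comp_def A0_def ellmap_comp[OF u] id_def by (rule ellmap_id[OF u]) (simp add: an)
    qed
  qed
  have A0u: "A0 (u l) = a l *\<^sub>R u l" if "l < DIM('a)" for l
    by (rule onf_eqI[OF u]) (use that in \<open>simp add: A0_def ellmap_inner[OF u] onfD[OF u]\<close>)
  have AF0: "A0 ` F0 \<subseteq> F0"
  proof -
    have "A0 ` F0 = span (A0 ` u ` {m..<DIM('a)})"
      unfolding F0_def by (simp add: span_linear_image[OF linA0])
    also have "\<dots> \<subseteq> F0"
      by (rule span_minimal) (auto simp: F0_def A0u span_base span_scale)
    finally show ?thesis .
  qed
  have AW0: "A0 x = lam *\<^sub>R x" if x: "x \<in> F0\<^sup>\<bottom>" for x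
  proof (rule onf_eqI[OF u])
    fix k assume k: "k < DIM('a)"
    show "A0 x \<bullet> u k = lam *\<^sub>R x \<bullet> u k"
    proof (cases "k < m")
      case True then show ?thesis by (simp add: A0_def ellmap_inner[OF u k] a_def)
    next
      case False
      then have "u k \<in> F0" using k by (auto simp: F0_def intro: span_base)
      then have "x \<bullet> u k = 0" using x by (simp add: orth_comp_inner)
      then show ?thesis by (simp add: A0_def ellmap_inner[OF u k])
    qed
  qed
  have "F_operator F0 A0"
    unfolding F_operator_def
  proof (intro conjI)
    show "A0 ` (F0\<^sup>\<bottom>) \<subseteq> F0\<^sup>\<bottom>"
    proof
      fix y assume "y \<in> A0 ` (F0\<^sup>\<bottom>)"
      then obtain x where x: "x \<in> F0\<^sup>\<bottom>" and y: "y = A0 x" by blast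
      show "y \<in> F0\<^sup>\<bottom>" using AW0[OF x] x y subspace_scale[OF subspace_orthogonal_comp[of F0]] by simp
    qed
    show "\<exists>c. c \<noteq> 0 \<and> (\<forall>x\<in>F0\<^sup>\<bottom>. A0 x = c *\<^sub>R x)"
      using AW0 lam by (intro exI[of _ lam]) auto
  qed (use linA0 bijA0 AF0 in auto)
  then have "ellipsoid_rev_dim s E0"
    unfolding ellipsoid_rev_dim_def ellipsoid_rev_def E0_def using sF0 dF0 by blast
  moreover have "E0 \<subseteq> {x. eqf u lam x \<le> 1}"
  proof
    fix y assume "y \<in> E0"
    then obtain x where x: "norm x \<le> 1" and y: "y = A0 x" by (auto simp: E0_def)
    have "eqf u lam y = (\<Sum>i<DIM('a). (a i * (x \<bullet> u i))\<^sup>2 / (lam ^ (i + 1))\<^sup>2)"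
      unfolding eqf_def y A0_def by (intro sum.cong) (auto simp: ellmap_inner[OF u])
    also have "\<dots> \<le> (\<Sum>i<DIM('a). (x \<bullet> u i)\<^sup>2)"
    proof (rule sum_mono)
      fix i assume "i \<in> {..<DIM('a)}"
      have ai: "a i \<le> lam ^ (i + 1)" using lam by (simp add: a_def)
      then have "(a i)\<^sup>2 \<le> (lam ^ (i + 1))\<^sup>2" using apos[of i] by (intro power_mono) auto
      moreover have "(lam ^ (i + 1))\<^sup>2 > 0" using lam by simp
      ultimately have "(a i)\<^sup>2 / (lam ^ (i + 1))\<^sup>2 \<le> 1" by simp
      then have "(a i)\<^sup>2 / (lam ^ (i + 1))\<^sup>2 * (x \<bullet> u i)\<^sup>2 \<le> 1 * (x \<bullet> u i)\<^sup>2"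
        by (intro mult_right_mono) auto
      then show "(a i * (x \<bullet> u i))\<^sup>2 / (lam ^ (i + 1))\<^sup>2 \<le> (x \<bullet> u i)\<^sup>2"
        by (simp add: power_mult_distrib)
    qed
    also have "\<dots> = (norm x)\<^sup>2" by (simp add: onf_norm2[OF u])
    also have "\<dots> \<le> 1" using x by (simp add: power_le_one)
    finally show "y \<in> {x. eqf u lam x \<le> 1}" by simp
  qed
  moreover have "2 * (\<Sum>l<m. l) = (m - 1) * m" by (rule gauss_lessThan)
  moreover have "measure lebesgue E0 * lam ^ (\<Sum>l<m. l) = (\<Prod>i<DIM('a). lam ^ (i + 1)) * measure lebesgue (cball (0::'a) 1)"
  proof -
    have "(\<Prod>i<DIM('a). lam ^ (i + 1)) = (\<Prod>i<DIM('a). a i * (if i < m then lam ^ i else 1))"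
      by (rule prod.cong) (auto simp: a_def)
    also have "\<dots> = (\<Prod>i<DIM('a). a i) * (\<Prod>i<DIM('a). (if i < m then lam ^ i else 1))"
      by (simp add: prod.distrib)
    also have "(\<Prod>i<DIM('a). (if i < m then lam ^ i else 1)) = (\<Prod>i<m. lam ^ i)"
    proof -
      have "{..<DIM('a)} \<inter> {i. i < m} = {..<m}" using mn by auto
      then show ?thesis by (simp add: prod.If_cases)
    qed
    also have "\<dots> = lam ^ (\<Sum>l<m. l)" by (simp add: power_sum)
    finally have "(\<Prod>i<DIM('a). lam ^ (i + 1)) = (\<Prod>i<DIM('a). a i) * lam ^ (\<Sum>l<m. l)" .
    moreover have "measure lebesgue E0 = (\<Prod>i<DIM('a). a i) * measure lebesgue (cball (0::'a) 1)"
      using vol_ellmap[OF u apos] by (simp add: E0_def A0_def)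
    ultimately show ?thesis by (simp add: algebra_simps)
  qed
  ultimately show ?thesis using that by blast
qed


lemma relint_in_ball:
  fixes P :: "'a::euclidean_space set"
  assumes q0: "q0 \<in> P" and sub: "\<And>q. q \<in> P \<Longrightarrow> norm (q - q0) \<le> r" and r: "r > 0"
    and p: "p \<in> rel_interior P"
  shows "norm (p - q0) < r"
proof (rule ccontr)
  assume "\<not> norm (p - q0) < r"
  moreover have pP: "p \<in> P" using p rel_interior_subset by blast
  ultimately have nr: "norm (p - q0) = r" using sub by force
  obtain e where e: "e > 0" and eb: "ball p e \<inter> affine hull P \<subseteq> P"
    using p by (auto simp: mem_rel_interior_ball)
  define t where "t = e / (2 * r)"
  have t: "t > 0" using e r by (simp add: t_def)
  define p' where "p' = p + t *\<^sub>R (p - q0)"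
  have "p' \<in> affine hull P"
    unfolding p'_def by (rule mem_affine_3_minus) (auto intro: hull_inc pP q0)
  moreover have "p' \<in> ball p e"
  proof -
    have "dist p p' = t * r" using t nr by (simp add: p'_def dist_norm)
    also have "\<dots> < e" using e r by (simp add: t_def)
    finally show ?thesis by simp
  qed
  ultimately have "p' \<in> P" using eb by blast
  then have "norm (p' - q0) \<le> r" by (rule sub)
  moreover have "p' - q0 = (1 + t) *\<^sub>R (p - q0)" by (simp add: p'_def algebra_simps)
  then have "norm (p' - q0) = (1 + t) * r" using t nr by simp
  moreover have "t * r > 0" using t r by simp
  ultimately show False by (simp add: algebra_simps)
qed

lemma orth_proj_eq:
  fixes F :: "'a::euclidean_space set"
  assumes "f \<in> F" "h \<in> F\<^sup>\<bottom>"
  shows "orth_proj (F\<^sup>\<bottom>) (f + h) = h"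
  unfolding orth_proj_def
proof (rule the_equality)
  show "h \<in> F\<^sup>\<bottom> \<and> (\<forall>z\<in>F\<^sup>\<bottom>. (f + h - h) \<bullet> z = 0)"
    using assms by (auto simp: orth_comp_inner inner_commute)
next
  fix y assume y: "y \<in> F\<^sup>\<bottom> \<and> (\<forall>z\<in>F\<^sup>\<bottom>. (f + h - y) \<bullet> z = 0)"
  have hy: "h - y \<in> F\<^sup>\<bottom>" using y assms(2) by (simp add: subspace_diff subspace_orthogonal_comp)
  have "(f + h - y) \<bullet> (h - y) = 0" using y hy by blast
  moreover have "f \<bullet> (h - y) = 0" using orth_comp_inner[OF hy assms(1)] by (simp add: inner_commute)
  ultimately have "(h - y) \<bullet> (h - y) = 0"
    by (simp add: inner_add_left inner_diff_left algebra_simps)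
  then show "y = h" by simp
qed

lemma eqf_half:
  assumes "eqf u lam p \<le> 1" "eqf u lam q \<le> 1"
  shows "eqf u lam ((1/2) *\<^sub>R (p - q)) \<le> 1"
proof -
  have "eqf u lam (p - q) \<le> 2 * (eqf u lam p + eqf u lam q)"
    unfolding eqf_def sum_distrib_left sum.distrib[symmetric] distrib_left[symmetric]
  proof (rule sum_mono)
    fix i
    define a where "a = p \<bullet> u i"
    define b where "b = q \<bullet> u i"
    have e1: "(a - b)\<^sup>2 = a\<^sup>2 - 2 * (a * b) + b\<^sup>2" by (simp add: power2_eq_square algebra_simps)
    have e2: "(a + b)\<^sup>2 = a\<^sup>2 + 2 * (a * b) + b\<^sup>2" by (simp add: power2_eq_square algebra_simps)
    have e3: "0 \<le> (a + b)\<^sup>2" by simp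
    have e4: "2 * (a\<^sup>2 + b\<^sup>2) - (a - b)\<^sup>2 = (a + b)\<^sup>2" by (simp add: power2_eq_square algebra_simps)
    have "(a - b)\<^sup>2 \<le> 2 * (a\<^sup>2 + b\<^sup>2)" using e4 e3 by linarith
    then have "((p - q) \<bullet> u i)\<^sup>2 \<le> 2 * ((p \<bullet> u i)\<^sup>2 + (q \<bullet> u i)\<^sup>2)"
      by (simp add: a_def b_def inner_diff_left)
    then show "((p - q) \<bullet> u i)\<^sup>2 / (lam ^ (i + 1))\<^sup>2
      \<le> 2 * ((p \<bullet> u i)\<^sup>2 / (lam ^ (i + 1))\<^sup>2 + (q \<bullet> u i)\<^sup>2 / (lam ^ (i + 1))\<^sup>2)"
      by (simp add: add_divide_distrib[symmetric] divide_right_mono)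
  qed
  then show ?thesis using assms by (simp add: eqf_scale power2_eq_square)
qed

lemma norm_orth_le:
  fixes f h :: "'a::euclidean_space"
  assumes "f \<bullet> h = 0"
  shows "norm h \<le> norm (f + h)"
proof -
  have "(norm (f + h))\<^sup>2 = (norm f)\<^sup>2 + (norm h)\<^sup>2"
    using assms by (simp add: power2_norm_eq_inner inner_add_left inner_add_right inner_commute)
  then have "(norm h)\<^sup>2 \<le> (norm (f + h))\<^sup>2" by simp
  then show ?thesis by (rule power2_le_imp_le) simp
qed

lemma part2_from_witness:
  fixes F E :: "'a::euclidean_space set" and A :: "'a \<Rightarrow> 'a"
  assumes subF: "subspace F" and linA: "linear A" and AF: "A ` F \<subseteq> F"
    and AW: "\<And>x. x \<in> F\<^sup>\<bottom> \<Longrightarrow> A x = c *\<^sub>R x" and c0: "c \<noteq> 0"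
    and lam: "lam > 0"
    and Eeq: "E = {x. eqf u lam x \<le> 1}"
    and yE: "eqf u lam y \<le> 1" and yW: "y \<in> F\<^sup>\<bottom>" and yn: "lam * \<bar>c\<bar> \<le> norm y"
  shows "\<not> (E \<inter> F\<^sup>\<bottom> \<subseteq> (\<lambda>y. x + lam *\<^sub>R y) ` rel_interior (orth_proj (F\<^sup>\<bottom>) ` ((\<lambda>x. A x + z0) ` cball 0 1)))"
proof
  define P where "P = orth_proj (F\<^sup>\<bottom>) ` ((\<lambda>x. A x + z0) ` cball 0 1)"
  obtain f0 h0 where f0: "f0 \<in> F" and h0: "h0 \<in> F\<^sup>\<bottom>" and z0: "z0 = f0 + h0"
    using orth_decomp[OF subF] by blast
  have q0: "orth_proj (F\<^sup>\<bottom>) z0 = h0" using orth_proj_eq[OF f0 h0] z0 by simp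
  have q0P: "h0 \<in> P"
  proof -
    have "z0 \<in> (\<lambda>x. A x + z0) ` cball 0 1" using linear_0[OF linA] by force
    then show ?thesis using q0 unfolding P_def by force
  qed
  have Psub: "norm (q - h0) \<le> \<bar>c\<bar>" if "q \<in> P" for q
  proof -
    have "q \<in> (\<lambda>x. orth_proj (F\<^sup>\<bottom>) (A x + z0)) ` cball 0 1"
      using that unfolding P_def image_image .
    then obtain x' where x'c: "x' \<in> cball 0 1" and q: "q = orth_proj (F\<^sup>\<bottom>) (A x' + z0)"
      by (rule imageE)
    have x': "norm x' \<le> 1" using x'c by simp
    obtain f h where f: "f \<in> F" and h: "h \<in> F\<^sup>\<bottom>" and xe: "x' = f + h"
      using orth_decomp[OF subF] by blast
    have "A x' + z0 = (A f + f0) + (c *\<^sub>R h + h0)"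
      by (simp add: xe z0 linear_add[OF linA] AW[OF h] algebra_simps)
    moreover have "A f + f0 \<in> F" using AF f f0 subF by (auto intro: subspace_add)
    moreover have "c *\<^sub>R h + h0 \<in> F\<^sup>\<bottom>"
      by (rule subspace_add[OF subspace_orthogonal_comp subspace_scale[OF subspace_orthogonal_comp h] h0])
    ultimately have "q = c *\<^sub>R h + h0" using q orth_proj_eq by metis
    then have "norm (q - h0) = \<bar>c\<bar> * norm h" by simp
    also have "norm h \<le> 1"
      using norm_orth_le[of f h] orth_comp_inner[OF h f] x' xe by (simp add: inner_commute)
    then have "\<bar>c\<bar> * norm h \<le> \<bar>c\<bar>" by (simp add: mult_left_le)
    finally show ?thesis .
  qed
  assume H: "E \<inter> F\<^sup>\<bottom> \<subseteq> (\<lambda>y. x + lam *\<^sub>R y) ` rel_interior (orth_proj (F\<^sup>\<bottom>) ` ((\<lambda>x. A x + z0) ` cball 0 1))"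
  have "y \<in> E \<inter> F\<^sup>\<bottom>" using yE yW Eeq by simp
  then obtain p1 where p1: "p1 \<in> rel_interior P" and y1: "y = x + lam *\<^sub>R p1"
    using H unfolding P_def by blast
  have "eqf u lam (-y) = eqf u lam y" using eqf_scale[of u lam "-1" y] by simp
  moreover have "-y \<in> F\<^sup>\<bottom>" by (rule subspace_neg[OF subspace_orthogonal_comp yW])
  ultimately have "-y \<in> E \<inter> F\<^sup>\<bottom>" using yE Eeq by simp
  then obtain p2 where p2: "p2 \<in> rel_interior P" and y2: "-y = x + lam *\<^sub>R p2"
    using H unfolding P_def by blast
  have c_pos: "\<bar>c\<bar> > 0" using c0 by simp
  have n1: "norm (p1 - h0) < \<bar>c\<bar>" by (rule relint_in_ball[OF q0P Psub c_pos p1])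
  have n2: "norm (p2 - h0) < \<bar>c\<bar>" by (rule relint_in_ball[OF q0P Psub c_pos p2])
  have "2 *\<^sub>R y = y - (-y)" by (simp add: scaleR_2)
  also have "\<dots> = (x + lam *\<^sub>R p1) - (x + lam *\<^sub>R p2)" by (simp only: y2[symmetric]) (simp add: y1)
  also have "\<dots> = lam *\<^sub>R ((p1 - h0) - (p2 - h0))" by (simp add: algebra_simps)
  finally have "2 *\<^sub>R y = lam *\<^sub>R ((p1 - h0) - (p2 - h0))" .
  then have "2 * norm y = lam * norm ((p1 - h0) - (p2 - h0))"
    using lam by (metis norm_scaleR abs_of_pos zero_less_numeral abs_numeral)
  also have "\<dots> \<le> lam * (norm (p1 - h0) + norm (p2 - h0))"
    using lam by (intro mult_left_mono norm_triangle_ineq4) auto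
  also have "\<dots> < lam * (2 * \<bar>c\<bar>)"
    using lam n1 n2 by (intro mult_strict_left_mono) auto
  finally show False using yn by linarith
qed

theorem mainTheorem7:
  fixes E E' F :: "'a::euclidean_space set"
    and u :: "nat \<Rightarrow> 'a" and s :: nat and lam :: real
  assumes s_le: "s + 2 \<le> DIM('a)"
    and lam_pos: "lam > 0"
    and u_orthonormal: "\<forall>i<DIM('a). \<forall>j<DIM('a). u i \<bullet> u j = (if i = j then 1 else 0)"
    and E_def: "E = {x. (\<Sum>i<DIM('a). (x \<bullet> u i)\<^sup>2 / (lam ^ (i + 1))\<^sup>2) \<le> 1}"
    and E'_rev: "ellipsoid_rev_dim s E'"
    and E'_sub: "E' \<subseteq> E"
    and E'_max: "\<forall>E''. ellipsoid_rev_dim s E'' \<and> E'' \<subseteq> E \<longrightarrow>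
                    measure lebesgue E'' \<le> measure lebesgue E'"
    and F_sub: "subspace F" and F_dim: "dim F = s"
    and F_axis: "ellipsoid_rev F E'"
  shows "measure lebesgue E' / measure lebesgue E \<le> 1 / lam \<and>
         (\<forall>x. \<not> (E \<inter> F\<^sup>\<bottom> \<subseteq>
              (\<lambda>y. x + lam *\<^sub>R y) ` rel_interior (orth_proj (F\<^sup>\<bottom>) ` E')))"
proof -
  obtain A z0 where FA: "F_operator F A" and E'eq: "E' = (\<lambda>x. A x + z0) ` cball 0 1"
    using F_axis unfolding ellipsoid_rev_def by blast
  have linA: "linear A" and bijA: "bij A" and AF: "A ` F \<subseteq> F"
    using FA unfolding F_operator_def by auto
  obtain c where c0: "c \<noteq> 0" and AW: "\<And>x. x \<in> F\<^sup>\<bottom> \<Longrightarrow> A x = c *\<^sub>R x"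
    using FA unfolding F_operator_def by blast
  have injA: "inj A" using bijA by (simp add: bij_is_inj)
  have u: "onf u" using u_orthonormal by (simp add: onf_def)
  have Eeq: "E = {x. eqf u lam x \<le> 1}" using E_def by (simp add: eqf_def)
  have contain: "eqf u lam (A x) \<le> 1" if x: "norm x \<le> 1" for x
  proof -
    have "A x + z0 \<in> E'" "A (-x) + z0 \<in> E'" using x by (auto simp: E'eq)
    then have e1: "eqf u lam (A x + z0) \<le> 1" and e2: "eqf u lam (A (-x) + z0) \<le> 1"
      using E'_sub Eeq by auto
    have "A x + z0 - (A (-x) + z0) = 2 *\<^sub>R A x"
      by (simp add: linear_neg[OF linA] scaleR_2)
    then have "A x = (1/2) *\<^sub>R (A x + z0 - (A (-x) + z0))" by simp
    then show ?thesis using eqf_half[OF e1 e2] by simp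
  qed
  have dWF: "dim (F\<^sup>\<bottom>) + s = DIM('a)" using dim_orth_comp[OF F_sub] F_dim by simp
  then have dW: "2 \<le> dim (F\<^sup>\<bottom>)" using s_le by linarith
  have cA: "compact (A ` cball 0 1)" by (rule compact_linear_image[OF linA compact_cball])
  have E'tr: "E' = (+) z0 ` (A ` cball 0 1)" by (auto simp: E'eq image_image add.commute)
  have mE': "measure lebesgue E' = measure lebesgue (A ` cball 0 1)"
    by (simp add: E'tr measure_translation)
  have cE': "compact E'" unfolding E'tr by (rule compact_translation[OF cA])
  have Eell: "E = ellmap u (\<lambda>i. lam ^ (i + 1)) ` cball 0 1" using Eeq E_ellmap[OF u lam_pos] by simp
  have cE: "compact E" unfolding Eell by (rule compact_linear_image[OF linear_ellmap compact_cball])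
  have mE: "measure lebesgue E = (\<Prod>i<DIM('a). lam ^ (i + 1)) * measure lebesgue (cball (0::'a) 1)"
    unfolding Eell by (rule vol_ellmap[OF u]) (use lam_pos in simp)
  have vB: "measure lebesgue (cball (0::'a) 1) > 0" by (rule measure_cball_pos)
  have pl: "(\<Prod>i<DIM('a). lam ^ (i + 1)) > 0" using lam_pos by (simp add: prod_pos)
  have Epos: "measure lebesgue E > 0" using mE vB pl by simp
  have prodrev: "(\<Prod>i<DIM('a). lam ^ (i + 1)) = (\<Prod>i<DIM('a). lam ^ (DIM('a) - i))"
  proof -
    have "(\<Prod>i<DIM('a). lam ^ (i + 1)) = (\<Prod>i<DIM('a). lam ^ (DIM('a) - Suc i + 1))"
      by (rule prod.nat_diff_reindex[symmetric])
    also have "\<dots> = (\<Prod>i<DIM('a). lam ^ (DIM('a) - i))"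
      by (rule prod.cong) (auto simp: Suc_diff_Suc)
    finally show ?thesis .
  qed
  have P2: "\<forall>x. \<not> (E \<inter> F\<^sup>\<bottom> \<subseteq> (\<lambda>y. x + lam *\<^sub>R y) ` rel_interior (orth_proj (F\<^sup>\<bottom>) ` E'))"
    if wit: "\<exists>y. eqf u lam y \<le> 1 \<and> y \<in> F\<^sup>\<bottom> \<and> lam * \<bar>c\<bar> \<le> norm y"
  proof
    fix x
    obtain y where y: "eqf u lam y \<le> 1" "y \<in> F\<^sup>\<bottom>" "lam * \<bar>c\<bar> \<le> norm y" using wit by blast
    show "\<not> (E \<inter> F\<^sup>\<bottom> \<subseteq> (\<lambda>y. x + lam *\<^sub>R y) ` rel_interior (orth_proj (F\<^sup>\<bottom>) ` E'))"
      unfolding E'eq by (rule part2_from_witness[OF F_sub linA AF AW c0 lam_pos Eeq y])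
  qed
  show ?thesis
  proof (cases "lam \<le> 1")
    case True
    have "measure lebesgue E' \<le> measure lebesgue E"
      by (rule measure_mono_fmeasurable[OF E'_sub]) (use cE' cE lmeasurable_compact in auto)
    then have "measure lebesgue E' / measure lebesgue E \<le> 1" using Epos by simp
    also have "1 \<le> 1 / lam" using True lam_pos by simp
    finally have part1: "measure lebesgue E' / measure lebesgue E \<le> 1 / lam" .
    have "\<exists>y. eqf u lam y \<le> 1 \<and> y \<in> F\<^sup>\<bottom> \<and> lam * \<bar>c\<bar> \<le> norm y"
    proof -
      have "F\<^sup>\<bottom> \<noteq> {0}" using dW by (metis dim_singleton not_numeral_le_zero)
      then obtain g where g: "g \<in> F\<^sup>\<bottom>" "g \<noteq> 0"
        using subspace_0[OF subspace_orthogonal_comp] by blast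
      define g' where "g' = g /\<^sub>R norm g"
      have g'W: "g' \<in> F\<^sup>\<bottom>" using g by (simp add: g'_def subspace_scale subspace_orthogonal_comp)
      have ng': "norm g' = 1" using g by (simp add: g'_def)
      have "eqf u lam (A g') \<le> 1" using contain ng' by simp
      moreover have "A g' \<in> F\<^sup>\<bottom>" using AW[OF g'W] g'W by (simp add: subspace_scale subspace_orthogonal_comp)
      moreover have "lam * \<bar>c\<bar> \<le> norm (A g')" using AW[OF g'W] ng' True c0 by simp
      ultimately show ?thesis by blast
    qed
    then show ?thesis using part1 P2 by blast
  next
    case False
    then have lam1: "lam \<ge> 1" and lamgt: "lam > 1" by auto
    have sa: "selfadj (\<lambda>x. adjoint A (A x))"
      unfolding selfadj_def
    proof
      show "linear (\<lambda>x. adjoint A (A x))"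
        using linear_compose[OF linA adjoint_linear[OF linA]] by (simp add: comp_def)
      show "\<forall>x y. adjoint A (A x) \<bullet> y = x \<bullet> adjoint A (A y)"
        by (simp add: adjoint_works[OF linA] inner_commute)
    qed
    obtain w \<mu> where w: "onf w" and eig: "\<And>i. i < DIM('a) \<Longrightarrow> adjoint A (A (w i)) = \<mu> i *\<^sub>R w i"
      and so: "\<And>i j. i \<le> j \<Longrightarrow> j < DIM('a) \<Longrightarrow> \<mu> j \<le> \<mu> i"
      using spectral[OF sa] by blast
    interpret ctx u lam A F c w \<mu>
      by (rule ctx.intro[OF u lam1 linA injA F_sub AF c0 AW contain w eig so])
    have mE'2: "measure lebesgue E' = (\<Prod>i<DIM('a). \<sigma> i) * measure lebesgue (cball (0::'a) 1)"
      using mE' vol_A by simp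
    have ps: "(\<Prod>i<DIM('a). \<sigma> i) * lam \<le> (\<Prod>i<DIM('a). lam ^ (DIM('a) - i))"
      by (rule part1_core[OF dW])
    have "measure lebesgue E' / measure lebesgue E = (\<Prod>i<DIM('a). \<sigma> i) / (\<Prod>i<DIM('a). lam ^ (DIM('a) - i))"
      unfolding mE'2 mE prodrev using vB by simp
    also have "\<dots> \<le> 1 / lam"
      using ps pl lam_pos prodrev by (simp add: divide_le_eq field_simps)
    finally have part1: "measure lebesgue E' / measure lebesgue E \<le> 1 / lam" .
    obtain E0 T0 where E0r: "ellipsoid_rev_dim s E0" and E0s: "E0 \<subseteq> {x. eqf u lam x \<le> 1}"
      and T0: "2 * T0 = (DIM('a) - s - 1) * (DIM('a) - s)"
      and mE0: "measure lebesgue E0 * lam ^ T0 = (\<Prod>i<DIM('a). lam ^ (i + 1)) * measure lebesgue (cball (0::'a) 1)"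
      using competitor[OF u lam1, of s] s_le by auto
    have "measure lebesgue E0 \<le> measure lebesgue E'" using E'_max E0r E0s Eeq by blast
    then have "(\<Prod>i<DIM('a). lam ^ (i + 1)) * measure lebesgue (cball (0::'a) 1)
        \<le> (\<Prod>i<DIM('a). \<sigma> i) * measure lebesgue (cball (0::'a) 1) * lam ^ T0"
      using mE0 mE'2 lam_pos by (metis mult_right_mono zero_le_power less_imp_le)
    then have compet: "(\<Prod>i<DIM('a). lam ^ (DIM('a) - i)) \<le> (\<Prod>i<DIM('a). \<sigma> i) * lam ^ T0"
      using vB prodrev by (simp add: algebra_simps)
    have T0': "2 * T0 = (dim (F\<^sup>\<bottom>) - 1) * dim (F\<^sup>\<bottom>)"
      using T0 dWF by (metis add_diff_cancel_right')
    obtain y where "eqf u lam y \<le> 1" "y \<in> F\<^sup>\<bottom>" "lam * \<bar>c\<bar> \<le> norm y"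
      by (rule witness[OF dW lamgt T0' compet])
    then show ?thesis using part1 P2 by blast
  qed
qed


end
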